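(* Assume Case 3 holds. Then for every $n\ge1$ the order of $Q^n$ with respect to $z$, i.e. $\min\{i: \text{the coefficient of } z^iw^j \text{ in } Q^n \text{ is nonzero for some } j\}$, equals $\gamma_n$. Consequently $(\gamma_n,d^n)$ is the vertex of $N(Q^n)$ with minimal $x$-coordinate, and $N(Q^n)\subset\{(x,y):x\ge\gamma_n,\ x+l_2y\ge\gamma_n+l_2d^n\}$.
   Context: Let $f(z,w)=(p(z),q(z,w))$ be a holomorphic skew product germ at the origin of $\mathbb{C}^2$ with $f(0,0)=(0,0)$, where $p(z)=a_\delta z^\delta+O(z^{\delta+1})$ with $a_\delta\neq0$ and integer $\delta\ge1$, and $q(z,w)=\sum_{i+j\ge1}b_{ij}z^iw^j$ is not identically zero. For $n\ge1$ write $f^n=(p^n,Q^n)$. The Newton polygon $N(g)$ of a nonzero germ $g=\sum g_{ij}z^iw^j$ is the convex hull of $\bigcup_{g_{ij}\neq0}\{(x,y):x\ge i,\ y\ge j\}$. Let $(n_1,m_1),\dots,(n_s,m_s)$ be the vertices of $N(q)$ with $n_1<\cdots<n_s$, $m_1>\cdots>m_s$; for $1\le k\le s-1$ let $T_k$ be the $y$-intercept of the line through $(n_k,m_k)$ and $(n_{k+1},m_{k+1})$. Case 3 means: $s>1$ and $T_1\le\delta$; set $(\gamma,d)=(n_1,m_1)$ and $l_2=\frac{n_2-n_1}{m_1-m_2}$. Define $\gamma_n=\gamma(\delta^{n-1}+\delta^{n-2}d+\cdots+d^{n-1})$. *)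

theory Defs
  imports "HOL-Analysis.Analysis"
begin

text \<open>A function of two complex variables is given near the origin by the (unconditionally,
  hence absolutely) convergent double power series with coefficients c on some polydisc.\<close>
definition pseries2_at0 :: "(complex \<Rightarrow> complex \<Rightarrow> complex) \<Rightarrow> (nat \<Rightarrow> nat \<Rightarrow> complex) \<Rightarrow> bool" where
  "pseries2_at0 F c \<longleftrightarrow> (\<exists>r>0. \<forall>z w. cmod z < r \<longrightarrow> cmod w < r \<longrightarrow>
       ((\<lambda>(i,j). c i j * z ^ i * w ^ j) has_sum F z w) UNIV)"

text \<open>Second component of the iterates of the skew product f(z,w) = (p z, q z w):
  f^n = (p^n, skewQ p q n).\<close>
fun skewQ :: "(complex \<Rightarrow> complex) \<Rightarrow> (complex \<Rightarrow> complex \<Rightarrow> complex) \<Rightarrow> nat \<Rightarrow> complex \<Rightarrow> complex \<Rightarrow> complex" where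
  "skewQ p q 0 z w = w"
| "skewQ p q (Suc n) z w = q ((p ^^ n) z) (skewQ p q n z w)"

definition newton_polygon :: "(nat \<Rightarrow> nat \<Rightarrow> complex) \<Rightarrow> (real \<times> real) set" where
  "newton_polygon c = convex hull
     (\<Union>(i,j)\<in>{(i,j). c i j \<noteq> 0}. {v. fst v \<ge> real i \<and> snd v \<ge> real j})"

definition newton_vertices :: "(nat \<Rightarrow> nat \<Rightarrow> complex) \<Rightarrow> (real \<times> real) set" where
  "newton_vertices c = {v. v extreme_point_of newton_polygon c}"

definition z_order_is :: "(nat \<Rightarrow> nat \<Rightarrow> complex) \<Rightarrow> nat \<Rightarrow> bool" where
  "z_order_is c k \<longleftrightarrow> (\<exists>j. c k j \<noteq> 0) \<and> (\<forall>i<k. \<forall>j. c i j = 0)"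

end

theory Submission
  imports Defs "HOL-Complex_Analysis.Complex_Analysis"
begin



definition conv2 :: "(nat \<Rightarrow> nat \<Rightarrow> 'a::comm_semiring_1) \<Rightarrow> (nat \<Rightarrow> nat \<Rightarrow> 'a) \<Rightarrow> nat \<Rightarrow> nat \<Rightarrow> 'a" where
  "conv2 c d k l = (\<Sum>a\<le>k. \<Sum>b\<le>l. c a b * d (k-a) (l-b))"

lemma cauchy2:
  fixes f g :: "nat \<Rightarrow> nat \<Rightarrow> 'a::{real_normed_field,banach}"
  assumes f: "(\<lambda>(a,b). norm (f a b)) summable_on UNIV"
    and g: "(\<lambda>(a,b). norm (g a b)) summable_on UNIV"
  shows "(\<lambda>(k,l). norm (conv2 f g k l)) summable_on UNIV"
    and "(\<Sum>\<^sub>\<infinity>(k,l). conv2 f g k l) = (\<Sum>\<^sub>\<infinity>(a,b). f a b) * (\<Sum>\<^sub>\<infinity>(a,b). g a b)"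
proof -
  define h where "h = (\<lambda>(x::nat\<times>nat,y::nat\<times>nat). f (fst x) (snd x) * g (fst y) (snd y))"
  define Ng where "Ng = (\<Sum>\<^sub>\<infinity>(a,b). norm (g a b))"
  have hn: "(\<lambda>x. norm (h x)) summable_on (UNIV \<times> UNIV)"
  proof (rule iffD2[OF Infinite_Sum.abs_summable_on_Sigma_iff], intro conjI ballI)
    fix x :: "nat\<times>nat"
    have "(\<lambda>y. norm (f (fst x) (snd x)) * norm (g (fst y) (snd y))) summable_on UNIV"
      by (rule summable_on_cmult_right) (use g in \<open>simp add: case_prod_unfold\<close>)
    then show "(\<lambda>y. norm (h (x, y))) summable_on UNIV"
      by (simp add: h_def norm_mult)
  next
    have "(\<lambda>x. norm (f (fst x) (snd x)) * Ng) summable_on UNIV"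
      by (rule summable_on_cmult_left) (use f in \<open>simp add: case_prod_unfold\<close>)
    moreover have "infsum (\<lambda>y. norm (h (x, y))) UNIV = norm (f (fst x) (snd x)) * Ng" for x
      by (simp add: h_def norm_mult Ng_def infsum_cmult_right' case_prod_unfold)
    moreover have "Ng \<ge> 0" unfolding Ng_def by (rule infsum_nonneg) auto
    ultimately show "(\<lambda>x. norm (infsum (\<lambda>y. norm (h (x, y))) UNIV)) summable_on UNIV"
      by (simp add: abs_mult)
  qed
  have hsum: "h summable_on (UNIV \<times> UNIV)"
    using hn abs_summable_summable by blast
  have hval: "infsum h (UNIV \<times> UNIV) = (\<Sum>\<^sub>\<infinity>(a,b). f a b) * (\<Sum>\<^sub>\<infinity>(a,b). g a b)"
  proof -
    have "infsum h (UNIV \<times> UNIV) = infsum (\<lambda>x. infsum (\<lambda>y. h (x,y)) UNIV) UNIV"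
      using infsum_Sigma_banach[OF hsum] by simp
    also have "\<dots> = infsum (\<lambda>x. f (fst x) (snd x) * (\<Sum>\<^sub>\<infinity>(a,b). g a b)) UNIV"
      by (simp add: h_def infsum_cmult_right' case_prod_unfold)
    also have "\<dots> = (\<Sum>\<^sub>\<infinity>(a,b). f a b) * (\<Sum>\<^sub>\<infinity>(a,b). g a b)"
      by (simp add: infsum_cmult_left' case_prod_unfold)
    finally show ?thesis .
  qed
  define B where "B = (\<lambda>(k::nat,l::nat). {..k} \<times> {..l})"
  define h' where "h' = (\<lambda>(x::nat\<times>nat,y::nat\<times>nat). f (fst y) (snd y) * g (fst x - fst y) (snd x - snd y))"
  define jj where "jj = (\<lambda>(x::nat\<times>nat,y::nat\<times>nat). ((fst x + fst y, snd x + snd y), x))"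
  define ii where "ii = (\<lambda>(x::nat\<times>nat,y::nat\<times>nat). (y, (fst x - fst y, snd x - snd y)))"
  have bij1: "\<And>a. a \<in> UNIV \<times> UNIV \<Longrightarrow> ii (jj a) = a"
    and bij2: "\<And>a. a \<in> UNIV \<times> UNIV \<Longrightarrow> jj a \<in> Sigma UNIV B"
    and bij3: "\<And>b. b \<in> Sigma UNIV B \<Longrightarrow> jj (ii b) = b"
    and bij4: "\<And>b. b \<in> Sigma UNIV B \<Longrightarrow> ii b \<in> UNIV \<times> UNIV"
    by (auto simp: ii_def jj_def B_def)
  have hj: "\<And>a. a \<in> UNIV \<times> UNIV \<Longrightarrow> h' (jj a) = h a"
    by (auto simp: h'_def jj_def h_def)
  have hnj: "\<And>a. a \<in> UNIV \<times> UNIV \<Longrightarrow> norm (h' (jj a)) = norm (h a)"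
    using hj by simp
  have hs0: "(h has_sum infsum h (UNIV \<times> UNIV)) (UNIV \<times> UNIV)"
    using hsum by (rule has_sum_infsum)
  have eqv: "(h has_sum infsum h (UNIV \<times> UNIV)) (UNIV \<times> UNIV) = (h' has_sum infsum h (UNIV \<times> UNIV)) (Sigma UNIV B)"
    by (rule has_sum_reindex_bij_witness[of "UNIV \<times> UNIV" ii jj "Sigma UNIV B" h' h "infsum h (UNIV \<times> UNIV)" "infsum h (UNIV \<times> UNIV)", OF bij1 bij2 bij3 bij4 hj refl])
  have h's: "(h' has_sum infsum h (UNIV \<times> UNIV)) (Sigma UNIV B)"
    using hs0 eqv by blast
  have h'ns: "(\<lambda>x. norm (h' x)) summable_on (Sigma UNIV B)"
  proof -
    have "((\<lambda>x. norm (h x)) has_sum infsum (\<lambda>x. norm (h x)) (UNIV \<times> UNIV)) (UNIV \<times> UNIV)"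
      using hn by (simp add: has_sum_infsum)
    then have "((\<lambda>x. norm (h' x)) has_sum infsum (\<lambda>x. norm (h x)) (UNIV \<times> UNIV)) (Sigma UNIV B)"
      using has_sum_reindex_bij_witness[of "UNIV \<times> UNIV" ii jj "Sigma UNIV B" "\<lambda>x. norm (h' x)" "\<lambda>x. norm (h x)", OF bij1 bij2 bij3 bij4 hnj refl]
      by simp
    then show ?thesis by (auto simp: summable_on_def)
  qed
  have inner: "infsum (\<lambda>y. h' (x, y)) (B x) = conv2 f g (fst x) (snd x)" for x
    by (simp add: B_def h'_def conv2_def case_prod_unfold sum.cartesian_product)
  have innern: "norm (conv2 f g (fst x) (snd x)) \<le> infsum (\<lambda>y. norm (h' (x, y))) (B x)" for x
  proof -
    have fin: "finite (B x)" by (simp add: B_def case_prod_unfold)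
    have "norm (conv2 f g (fst x) (snd x)) = norm (sum (\<lambda>y. h' (x, y)) (B x))"
      using inner[of x] fin by simp
    also have "\<dots> \<le> sum (\<lambda>y. norm (h' (x, y))) (B x)" by (rule norm_sum)
    finally show ?thesis using fin by simp
  qed
  have outer: "(\<lambda>x. infsum (\<lambda>y. norm (h' (x, y))) (B x)) summable_on UNIV"
    using summable_on_Sigma_banach[of "\<lambda>x y. norm (h' (x,y))" UNIV B] h'ns
    by (simp add: case_prod_unfold)
  show "(\<lambda>(k,l). norm (conv2 f g k l)) summable_on UNIV"
    using summable_on_comparison_test[OF outer, of "\<lambda>x. norm (conv2 f g (fst x) (snd x))"] innern
    by (simp add: case_prod_unfold)
  have h'sum: "h' summable_on (Sigma UNIV B)" using h's summable_on_def by blast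
  have "infsum h' (Sigma UNIV B) = infsum (\<lambda>x. infsum (\<lambda>y. h' (x, y)) (B x)) UNIV"
    using infsum_Sigma_banach[OF h'sum] by simp
  also have "\<dots> = (\<Sum>\<^sub>\<infinity>(k,l). conv2 f g k l)" using inner by (simp add: case_prod_unfold)
  finally show "(\<Sum>\<^sub>\<infinity>(k,l). conv2 f g k l) = (\<Sum>\<^sub>\<infinity>(a,b). f a b) * (\<Sum>\<^sub>\<infinity>(a,b). g a b)"
    using h's hval infsumI by metis
qed

lemma has_sum_single:
  assumes "\<And>x. x \<noteq> p \<Longrightarrow> f x = 0"
  shows "(f has_sum f p) UNIV"
  by (rule has_sum_finite_neutralI[of "{p}"]) (use assms in auto)

lemma infsum_single:
  assumes "\<And>x. x \<noteq> p \<Longrightarrow> f x = 0"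
  shows "infsum f UNIV = f p"
  by (rule infsumI[OF has_sum_single[OF assms]])

definition absum :: "(nat \<Rightarrow> nat \<Rightarrow> complex) \<Rightarrow> real \<Rightarrow> bool" where
  "absum c \<rho> \<longleftrightarrow> (\<lambda>(k,l). norm (c k l) * \<rho>^k * \<rho>^l) summable_on UNIV"

definition Nrm :: "(nat \<Rightarrow> nat \<Rightarrow> complex) \<Rightarrow> real \<Rightarrow> real" where
  "Nrm c \<rho> = (\<Sum>\<^sub>\<infinity>(k,l). norm (c k l) * \<rho>^k * \<rho>^l)"

definition ev :: "(nat \<Rightarrow> nat \<Rightarrow> complex) \<Rightarrow> complex \<Rightarrow> complex \<Rightarrow> complex" where
  "ev c z w = (\<Sum>\<^sub>\<infinity>(k,l). c k l * z^k * w^l)"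

lemma Nrm_nonneg: "\<rho> \<ge> 0 \<Longrightarrow> Nrm c \<rho> \<ge> 0"
  unfolding Nrm_def by (rule infsum_nonneg) auto

lemma absum_mono:
  assumes "absum c \<rho>" "0 \<le> \<rho>'" "\<rho>' \<le> \<rho>"
  shows "absum c \<rho>'" "Nrm c \<rho>' \<le> Nrm c \<rho>"
proof -
  have le: "norm (c k l) * \<rho>'^k * \<rho>'^l \<le> norm (c k l) * \<rho>^k * \<rho>^l" for k l
    using assms by (intro mult_mono power_mono) auto
  show 1: "absum c \<rho>'"
    using assms(1) unfolding absum_def
    by (rule summable_on_comparison_test) (use le assms in auto)
  show "Nrm c \<rho>' \<le> Nrm c \<rho>"
    unfolding Nrm_def
    by (rule infsum_mono) (use 1 assms(1) le in \<open>auto simp: absum_def\<close>)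
qed

lemma ev_summable:
  assumes "absum c \<rho>" "norm z \<le> \<rho>" "norm w \<le> \<rho>"
  shows "(\<lambda>(k,l). norm (c k l * z^k * w^l)) summable_on UNIV"
    and "(\<lambda>(k,l). c k l * z^k * w^l) summable_on UNIV"
    and "norm (ev c z w) \<le> Nrm c \<rho>"
proof -
  have r0: "\<rho> \<ge> 0" using assms(2) norm_ge_zero order.trans by blast
  have le: "norm (c k l * z^k * w^l) \<le> norm (c k l) * \<rho>^k * \<rho>^l" for k l
    using assms r0 by (auto simp: norm_mult norm_power intro!: mult_mono power_mono)
  show 1: "(\<lambda>(k,l). norm (c k l * z^k * w^l)) summable_on UNIV"
    using assms(1) unfolding absum_def
    by (rule summable_on_comparison_test) (use le in auto)
  then show 2: "(\<lambda>(k,l). c k l * z^k * w^l) summable_on UNIV"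
    by (metis (mono_tags, lifting) abs_summable_summable case_prod_unfold summable_on_cong)
  have "norm (ev c z w) \<le> (\<Sum>\<^sub>\<infinity>(k,l). norm (c k l * z^k * w^l))"
    unfolding ev_def using norm_infsum_bound[of "\<lambda>(k,l). c k l * z^k * w^l" UNIV] 1
    by (simp add: case_prod_unfold)
  also have "\<dots> \<le> Nrm c \<rho>"
    unfolding Nrm_def
    by (rule infsum_mono) (use 1 assms(1) le in \<open>auto simp: absum_def\<close>)
  finally show "norm (ev c z w) \<le> Nrm c \<rho>" .
qed

lemma conv2_absum:
  assumes c: "absum c \<rho>" and d: "absum d \<rho>" and r: "\<rho> \<ge> 0"
  shows "absum (conv2 c d) \<rho>" "Nrm (conv2 c d) \<rho> \<le> Nrm c \<rho> * Nrm d \<rho>"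
proof -
  define f where "f = (\<lambda>a b. norm (c a b) * \<rho>^a * \<rho>^b)"
  define g where "g = (\<lambda>a b. norm (d a b) * \<rho>^a * \<rho>^b)"
  have fs: "(\<lambda>(a,b). norm (f a b)) summable_on UNIV"
    using c r unfolding absum_def f_def by (simp add: abs_mult)
  have gs: "(\<lambda>(a,b). norm (g a b)) summable_on UNIV"
    using d r unfolding absum_def g_def by (simp add: abs_mult)
  have cf: "conv2 f g k l = (\<Sum>a\<le>k. \<Sum>b\<le>l. norm (c a b) * norm (d (k-a) (l-b))) * \<rho>^k * \<rho>^l" for k l
  proof -
    have "conv2 f g k l = (\<Sum>a\<le>k. \<Sum>b\<le>l. norm (c a b) * norm (d (k-a) (l-b)) * (\<rho>^k * \<rho>^l))"
      unfolding conv2_def f_def g_def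
    proof (intro sum.cong refl)
      fix a b assume "a \<in> {..k}" "b \<in> {..l}"
      then have e: "\<rho>^k = \<rho>^a * \<rho>^(k-a)" "\<rho>^l = \<rho>^b * \<rho>^(l-b)"
        by (simp_all flip: power_add)
      then show "norm (c a b) * \<rho> ^ a * \<rho> ^ b * (norm (d (k - a) (l - b)) * \<rho> ^ (k - a) * \<rho> ^ (l - b)) =
         norm (c a b) * norm (d (k - a) (l - b)) * (\<rho> ^ k * \<rho> ^ l)"
        by (simp only: e) (simp add: mult_ac)
    qed
    then show ?thesis by (simp add: sum_distrib_right mult.assoc)
  qed
  have le: "norm (conv2 c d k l) * \<rho>^k * \<rho>^l \<le> conv2 f g k l" for k l
  proof -
    have "norm (conv2 c d k l) \<le> (\<Sum>a\<le>k. \<Sum>b\<le>l. norm (c a b) * norm (d (k-a) (l-b)))"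
      unfolding conv2_def
      by (rule order.trans[OF norm_sum sum_mono], rule order.trans[OF norm_sum], simp add: norm_mult)
    then show ?thesis unfolding cf using r
      by (intro mult_right_mono) auto
  qed
  have s2: "(\<lambda>(k,l). conv2 f g k l) summable_on UNIV"
  proof -
    have "(\<lambda>(k,l). norm (conv2 f g k l)) summable_on UNIV" by (rule cauchy2(1)[OF fs gs])
    moreover have "norm (conv2 f g k l) = conv2 f g k l" for k l
      unfolding cf using r by (simp add: abs_of_nonneg sum_nonneg)
    ultimately show ?thesis by simp
  qed
  show 1: "absum (conv2 c d) \<rho>"
    unfolding absum_def
    by (rule summable_on_comparison_test[OF s2]) (use le r in auto)
  have "Nrm (conv2 c d) \<rho> \<le> (\<Sum>\<^sub>\<infinity>(k,l). conv2 f g k l)"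
    unfolding Nrm_def by (rule infsum_mono) (use 1 s2 le in \<open>auto simp: absum_def\<close>)
  also have "\<dots> = (\<Sum>\<^sub>\<infinity>(a,b). f a b) * (\<Sum>\<^sub>\<infinity>(a,b). g a b)" by (rule cauchy2(2)[OF fs gs])
  finally show "Nrm (conv2 c d) \<rho> \<le> Nrm c \<rho> * Nrm d \<rho>" by (simp add: Nrm_def f_def g_def)
qed

lemma conv2_ev:
  assumes c: "absum c \<rho>" and d: "absum d \<rho>" and z: "norm z \<le> \<rho>" and w: "norm w \<le> \<rho>"
  shows "ev (conv2 c d) z w = ev c z w * ev d z w"
proof -
  define f where "f = (\<lambda>a b. c a b * z^a * w^b)"
  define g where "g = (\<lambda>a b. d a b * z^a * w^b)"
  have fs: "(\<lambda>(a,b). norm (f a b)) summable_on UNIV"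
    using ev_summable(1)[OF c z w] unfolding f_def .
  have gs: "(\<lambda>(a,b). norm (g a b)) summable_on UNIV"
    using ev_summable(1)[OF d z w] unfolding g_def .
  have cf: "conv2 f g k l = conv2 c d k l * z^k * w^l" for k l
  proof -
    have "conv2 f g k l = (\<Sum>a\<le>k. \<Sum>b\<le>l. c a b * d (k-a) (l-b) * (z^k * w^l))"
      unfolding conv2_def f_def g_def
    proof (intro sum.cong refl)
      fix a b assume "a \<in> {..k}" "b \<in> {..l}"
      then have e: "z^k = z^a * z^(k-a)" "w^l = w^b * w^(l-b)"
        by (simp_all flip: power_add)
      then show "c a b * z ^ a * w ^ b * (d (k - a) (l - b) * z ^ (k - a) * w ^ (l - b)) =
         c a b * d (k - a) (l - b) * (z ^ k * w ^ l)"
        by (simp only: e) (simp add: mult_ac)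
    qed
    then show ?thesis by (simp add: conv2_def sum_distrib_right mult.assoc)
  qed
  have "ev (conv2 c d) z w = (\<Sum>\<^sub>\<infinity>(k,l). conv2 f g k l)" unfolding ev_def by (simp add: cf)
  also have "\<dots> = (\<Sum>\<^sub>\<infinity>(a,b). f a b) * (\<Sum>\<^sub>\<infinity>(a,b). g a b)" by (rule cauchy2(2)[OF fs gs])
  also have "\<dots> = ev c z w * ev d z w" by (simp add: ev_def f_def g_def)
  finally show ?thesis .
qed

definition unit2 :: "nat \<Rightarrow> nat \<Rightarrow> complex" where
  "unit2 k l = (if k = 0 \<and> l = 0 then 1 else 0)"

fun cpow :: "(nat \<Rightarrow> nat \<Rightarrow> complex) \<Rightarrow> nat \<Rightarrow> nat \<Rightarrow> nat \<Rightarrow> complex" where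
  "cpow c 0 = unit2"
| "cpow c (Suc n) = conv2 c (cpow c n)"

lemma unit2_props:
  "absum unit2 \<rho>" "Nrm unit2 \<rho> = 1" "ev unit2 z w = 1"
proof -
  have "((\<lambda>(k,l). norm (unit2 k l) * \<rho>^k * \<rho>^l) has_sum 1) UNIV"
    using has_sum_single[of "(0,0)" "\<lambda>(k,l). norm (unit2 k l) * \<rho>^k * \<rho>^l"]
    by (auto simp: unit2_def)
  then show "absum unit2 \<rho>" "Nrm unit2 \<rho> = 1"
    unfolding absum_def Nrm_def by (auto simp: summable_on_def infsumI)
  show "ev unit2 z w = 1"
    unfolding ev_def
    by (subst infsum_single[of "(0,0)"]) (auto simp: unit2_def split: if_splits)
qed

lemma cpow_props:
  assumes c: "absum c \<rho>" and r: "\<rho> \<ge> 0"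
  shows "absum (cpow c n) \<rho> \<and> Nrm (cpow c n) \<rho> \<le> Nrm c \<rho> ^ n \<and>
    (\<forall>z w. norm z \<le> \<rho> \<longrightarrow> norm w \<le> \<rho> \<longrightarrow> ev (cpow c n) z w = ev c z w ^ n)"
proof (induction n)
  case 0
  then show ?case by (simp add: unit2_props)
next
  case (Suc n)
  have a: "absum (cpow c n) \<rho>" using Suc.IH by blast
  have nb: "Nrm (cpow c n) \<rho> \<le> Nrm c \<rho> ^ n" using Suc.IH by blast
  have evn: "ev (cpow c n) z w = ev c z w ^ n" if "norm z \<le> \<rho>" "norm w \<le> \<rho>" for z w
    using Suc.IH that by blast
  have "Nrm (cpow c (Suc n)) \<rho> \<le> Nrm c \<rho> * Nrm (cpow c n) \<rho>"
    using conv2_absum(2)[OF c a r] by simp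
  also have "\<dots> \<le> Nrm c \<rho> * Nrm c \<rho> ^ n"
    by (rule mult_left_mono[OF nb Nrm_nonneg[OF r]])
  finally have n1: "Nrm (cpow c (Suc n)) \<rho> \<le> Nrm c \<rho> ^ Suc n" by simp
  have a1: "absum (cpow c (Suc n)) \<rho>" using conv2_absum(1)[OF c a r] by simp
  have e1: "ev (cpow c (Suc n)) z w = ev c z w ^ Suc n" if "norm z \<le> \<rho>" "norm w \<le> \<rho>" for z w
    using conv2_ev[OF c a that] evn[OF that] by simp
  show ?case using n1 a1 e1 by blast
qed

definition mono2 :: "(nat \<Rightarrow> nat \<Rightarrow> complex) \<Rightarrow> (nat \<Rightarrow> nat \<Rightarrow> complex) \<Rightarrow> nat \<Rightarrow> nat \<Rightarrow> nat \<Rightarrow> nat \<Rightarrow> complex" where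
  "mono2 G H i j = conv2 (cpow G i) (cpow H j)"

definition comp2 :: "(nat \<Rightarrow> nat \<Rightarrow> complex) \<Rightarrow> (nat \<Rightarrow> nat \<Rightarrow> complex) \<Rightarrow> (nat \<Rightarrow> nat \<Rightarrow> complex) \<Rightarrow> nat \<Rightarrow> nat \<Rightarrow> complex" where
  "comp2 B G H k l = (\<Sum>\<^sub>\<infinity>(i,j). B i j * mono2 G H i j k l)"

lemma mono2_props:
  assumes G: "absum G \<rho>" and H: "absum H \<rho>" and r: "\<rho> \<ge> 0"
  shows "absum (mono2 G H i j) \<rho>" "Nrm (mono2 G H i j) \<rho> \<le> Nrm G \<rho> ^ i * Nrm H \<rho> ^ j"
    "norm z \<le> \<rho> \<Longrightarrow> norm w \<le> \<rho> \<Longrightarrow> ev (mono2 G H i j) z w = ev G z w ^ i * ev H z w ^ j"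
proof -
  have a1: "absum (cpow G i) \<rho>" and n1: "Nrm (cpow G i) \<rho> \<le> Nrm G \<rho> ^ i"
    using cpow_props[OF G r, of i] by blast+
  have a2: "absum (cpow H j) \<rho>" and n2: "Nrm (cpow H j) \<rho> \<le> Nrm H \<rho> ^ j"
    using cpow_props[OF H r, of j] by blast+
  show "absum (mono2 G H i j) \<rho>" unfolding mono2_def by (rule conv2_absum(1)[OF a1 a2 r])
  have "Nrm (mono2 G H i j) \<rho> \<le> Nrm (cpow G i) \<rho> * Nrm (cpow H j) \<rho>"
    unfolding mono2_def by (rule conv2_absum(2)[OF a1 a2 r])
  also have "\<dots> \<le> Nrm G \<rho> ^ i * Nrm H \<rho> ^ j"
    by (rule mult_mono[OF n1 n2]) (use Nrm_nonneg[OF r] in auto)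
  finally show "Nrm (mono2 G H i j) \<rho> \<le> Nrm G \<rho> ^ i * Nrm H \<rho> ^ j" .
  assume z: "norm z \<le> \<rho>" and w: "norm w \<le> \<rho>"
  have e1: "ev (cpow G i) z w = ev G z w ^ i" using cpow_props[OF G r, of i] z w by blast
  have e2: "ev (cpow H j) z w = ev H z w ^ j" using cpow_props[OF H r, of j] z w by blast
  show "ev (mono2 G H i j) z w = ev G z w ^ i * ev H z w ^ j"
    unfolding mono2_def using conv2_ev[OF a1 a2 z w] e1 e2 by simp
qed

lemma comp2_props:
  assumes F: "\<And>x y. norm x < R \<Longrightarrow> norm y < R \<Longrightarrow> ((\<lambda>(i,j). B i j * x^i * y^j) has_sum F x y) UNIV"
    and G: "absum G \<rho>" and H: "absum H \<rho>" and r: "\<rho> \<ge> 0"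
    and NG: "Nrm G \<rho> < R" and NH: "Nrm H \<rho> < R"
  shows "absum (comp2 B G H) \<rho>"
    and "norm z \<le> \<rho> \<Longrightarrow> norm w \<le> \<rho> \<Longrightarrow> F (ev G z w) (ev H z w) = ev (comp2 B G H) z w"
proof -
  define s where "s = max (Nrm G \<rho>) (Nrm H \<rho>)"
  have s0: "s \<ge> 0" using Nrm_nonneg[OF r] by (simp add: s_def le_max_iff_disj)
  have sR: "s < R" using NG NH by (simp add: s_def)
  have "((\<lambda>(i,j). B i j * (complex_of_real s)^i * (complex_of_real s)^j) has_sum F s s) UNIV"
    using F[of "complex_of_real s" "complex_of_real s"] s0 sR by simp
  then have "(\<lambda>(i,j). B i j * (complex_of_real s)^i * (complex_of_real s)^j) summable_on UNIV"
    by (auto simp: summable_on_def)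
  then have "(\<lambda>x. norm ((\<lambda>(i,j). B i j * (complex_of_real s)^i * (complex_of_real s)^j) x)) summable_on UNIV"
    using summable_on_iff_abs_summable_on_complex by blast
  then have Bs: "(\<lambda>(i,j). norm (B i j) * s^i * s^j) summable_on UNIV"
    using s0 by (simp add: case_prod_unfold norm_mult norm_power)
  define U where "U = (\<lambda>(ij::nat\<times>nat, kl::nat\<times>nat). norm (B (fst ij) (snd ij)) *
      (norm (mono2 G H (fst ij) (snd ij) (fst kl) (snd kl)) * \<rho>^(fst kl) * \<rho>^(snd kl)))"
  define g where "g = (\<lambda>ij::nat\<times>nat. norm (B (fst ij) (snd ij)) * Nrm (mono2 G H (fst ij) (snd ij)) \<rho>)"
  have Uin: "((\<lambda>kl. U (ij, kl)) has_sum g ij) UNIV" for ij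
  proof -
    have "absum (mono2 G H (fst ij) (snd ij)) \<rho>" by (rule mono2_props(1)[OF G H r])
    then have "((\<lambda>(k,l). norm (mono2 G H (fst ij) (snd ij) k l) * \<rho>^k * \<rho>^l) has_sum Nrm (mono2 G H (fst ij) (snd ij)) \<rho>) UNIV"
      unfolding absum_def Nrm_def by (rule has_sum_infsum)
    then show ?thesis
      unfolding U_def g_def using has_sum_cmult_right by (fastforce simp: case_prod_unfold)
  qed
  have gle: "g ij \<le> norm (B (fst ij) (snd ij)) * s^(fst ij) * s^(snd ij)" for ij
  proof -
    have "Nrm (mono2 G H (fst ij) (snd ij)) \<rho> \<le> Nrm G \<rho> ^ fst ij * Nrm H \<rho> ^ snd ij"
      by (rule mono2_props(2)[OF G H r])
    also have "\<dots> \<le> s ^ fst ij * s ^ snd ij"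
    proof (rule mult_mono)
      show "Nrm G \<rho> ^ fst ij \<le> s ^ fst ij" using Nrm_nonneg[OF r] by (intro power_mono) (auto simp: s_def)
      show "Nrm H \<rho> ^ snd ij \<le> s ^ snd ij" using Nrm_nonneg[OF r] by (intro power_mono) (auto simp: s_def)
      show "0 \<le> s ^ fst ij" using s0 by simp
      show "0 \<le> Nrm H \<rho> ^ snd ij" using Nrm_nonneg[OF r] by simp
    qed
    finally show ?thesis unfolding g_def
      by (simp add: mult.assoc mult_left_mono)
  qed
  have g0: "g ij \<ge> 0" for ij unfolding g_def using Nrm_nonneg[OF r] by simp
  have gs: "g summable_on UNIV"
    by (rule summable_on_comparison_test[OF Bs]) (use gle g0 in \<open>auto simp: case_prod_unfold\<close>)
  have Us: "U summable_on (UNIV \<times> UNIV)"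
    by (rule summable_on_SigmaI[OF Uin gs]) (use r in \<open>auto simp: U_def\<close>)
  show "absum (comp2 B G H) \<rho>"
  proof -
    have Us': "(\<lambda>(kl,ij). U (ij,kl)) summable_on (UNIV \<times> UNIV)"
      using Us summable_on_swap by blast
    have fib: "(\<lambda>ij. U (ij,kl)) summable_on UNIV" for kl
      using summable_on_SigmaD1[of "\<lambda>kl ij. U (ij,kl)" UNIV "\<lambda>_. UNIV" kl] Us' by simp
    have out: "(\<lambda>kl. infsum (\<lambda>ij. U (ij,kl)) UNIV) summable_on UNIV"
      using summable_on_Sigma_banach[of "\<lambda>kl ij. U (ij,kl)" UNIV "\<lambda>_. UNIV"] Us' by simp
    have le: "norm (comp2 B G H (fst kl) (snd kl)) * \<rho>^(fst kl) * \<rho>^(snd kl) \<le> infsum (\<lambda>ij. U (ij,kl)) UNIV" for kl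
    proof (cases "\<rho>^(fst kl) * \<rho>^(snd kl) = 0")
      case True
      have "infsum (\<lambda>ij. U (ij,kl)) UNIV \<ge> 0" by (rule infsum_nonneg) (use r in \<open>simp add: U_def\<close>)
      then show ?thesis using True by (metis mult.assoc mult_zero_right)
    next
      case False
      then have rp: "\<rho>^(fst kl) * \<rho>^(snd kl) > 0" using r
        by (metis mult_nonneg_nonneg order_le_less zero_le_power)
      have fn: "(\<lambda>ij. norm (B (fst ij) (snd ij) * mono2 G H (fst ij) (snd ij) (fst kl) (snd kl))) summable_on UNIV"
      proof -
        have "(\<lambda>ij. U (ij,kl) * (1 / (\<rho>^(fst kl) * \<rho>^(snd kl)))) summable_on UNIV"
          using fib[of kl] by (rule summable_on_cmult_left)
        moreover have "U (ij,kl) * (1 / (\<rho>^(fst kl) * \<rho>^(snd kl))) = norm (B (fst ij) (snd ij) * mono2 G H (fst ij) (snd ij) (fst kl) (snd kl))" for ij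
        proof -
          have "U (ij,kl) = norm (B (fst ij) (snd ij) * mono2 G H (fst ij) (snd ij) (fst kl) (snd kl)) * (\<rho>^(fst kl) * \<rho>^(snd kl))"
            by (simp add: U_def norm_mult mult_ac)
          moreover have "\<And>(x::real) p. p \<noteq> 0 \<Longrightarrow> x * p * (1 / p) = x" by simp
          ultimately show ?thesis using rp by (metis less_irrefl)
        qed
        ultimately show ?thesis by simp
      qed
      have "norm (comp2 B G H (fst kl) (snd kl)) \<le> (\<Sum>\<^sub>\<infinity>ij. norm (B (fst ij) (snd ij) * mono2 G H (fst ij) (snd ij) (fst kl) (snd kl)))"
        unfolding comp2_def using norm_infsum_bound[of "\<lambda>ij. B (fst ij) (snd ij) * mono2 G H (fst ij) (snd ij) (fst kl) (snd kl)" UNIV] fn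
        by (simp add: case_prod_unfold)
      then have "norm (comp2 B G H (fst kl) (snd kl)) * (\<rho>^(fst kl) * \<rho>^(snd kl)) \<le>
          (\<Sum>\<^sub>\<infinity>ij. norm (B (fst ij) (snd ij) * mono2 G H (fst ij) (snd ij) (fst kl) (snd kl))) * (\<rho>^(fst kl) * \<rho>^(snd kl))"
        using rp by (intro mult_right_mono) auto
      also have "\<dots> = (\<Sum>\<^sub>\<infinity>ij. norm (B (fst ij) (snd ij) * mono2 G H (fst ij) (snd ij) (fst kl) (snd kl)) * (\<rho>^(fst kl) * \<rho>^(snd kl)))"
        by (rule infsum_cmult_left'[symmetric])
      also have "\<dots> = infsum (\<lambda>ij. U (ij,kl)) UNIV"
        by (rule infsum_cong) (simp add: U_def norm_mult mult_ac)
      finally show ?thesis by (simp add: mult.assoc)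
    qed
    show ?thesis unfolding absum_def
      by (rule summable_on_comparison_test[OF out]) (use le r in \<open>auto simp: case_prod_unfold\<close>)
  qed
  assume z: "norm z \<le> \<rho>" and w: "norm w \<le> \<rho>"
  define V where "V = (\<lambda>ij::nat\<times>nat. \<lambda>kl::nat\<times>nat. B (fst ij) (snd ij) * mono2 G H (fst ij) (snd ij) (fst kl) (snd kl) * z^(fst kl) * w^(snd kl))"
  have Vle: "norm (V ij kl) \<le> U (ij,kl)" for ij kl
    unfolding V_def U_def using z w r
    by (auto simp: norm_mult norm_power mult.assoc intro!: mult_left_mono mult_mono power_mono)
  have Vs: "(\<lambda>(ij,kl). V ij kl) summable_on (UNIV \<times> UNIV)"
  proof -
    have "(\<lambda>x. norm ((\<lambda>(ij,kl). V ij kl) x)) summable_on (UNIV \<times> UNIV)"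
      by (rule summable_on_comparison_test[OF Us]) (use Vle in \<open>auto simp: case_prod_unfold\<close>)
    then show ?thesis using abs_summable_summable by blast
  qed
  have swap: "infsum (\<lambda>ij. infsum (\<lambda>kl. V ij kl) UNIV) UNIV = infsum (\<lambda>kl. infsum (\<lambda>ij. V ij kl) UNIV) UNIV"
    by (rule infsum_swap_banach[OF Vs])
  have xG: "norm (ev G z w) < R" using ev_summable(3)[OF G z w] NG by linarith
  have xH: "norm (ev H z w) < R" using ev_summable(3)[OF H z w] NH by linarith
  have lhs: "infsum (\<lambda>kl. V ij kl) UNIV = B (fst ij) (snd ij) * ev G z w ^ fst ij * ev H z w ^ snd ij" for ij
  proof -
    have "infsum (\<lambda>kl. V ij kl) UNIV = B (fst ij) (snd ij) * ev (mono2 G H (fst ij) (snd ij)) z w"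
      unfolding V_def ev_def by (simp add: infsum_cmult_right'[symmetric] case_prod_unfold mult_ac)
    then show ?thesis using mono2_props(3)[OF G H r z w] by (simp add: mult_ac)
  qed
  have rhs: "infsum (\<lambda>ij. V ij kl) UNIV = comp2 B G H (fst kl) (snd kl) * z^(fst kl) * w^(snd kl)" for kl
  proof -
    have "infsum (\<lambda>ij. V ij kl) UNIV = (\<Sum>\<^sub>\<infinity>ij. (B (fst ij) (snd ij) * mono2 G H (fst ij) (snd ij) (fst kl) (snd kl)) * (z^(fst kl) * w^(snd kl)))"
      by (rule infsum_cong) (simp add: V_def mult_ac)
    also have "\<dots> = (\<Sum>\<^sub>\<infinity>ij. B (fst ij) (snd ij) * mono2 G H (fst ij) (snd ij) (fst kl) (snd kl)) * (z^(fst kl) * w^(snd kl))"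
      by (rule infsum_cmult_left')
    finally show ?thesis by (simp add: comp2_def case_prod_unfold mult_ac)
  qed
  have "F (ev G z w) (ev H z w) = (\<Sum>\<^sub>\<infinity>(i,j). B i j * ev G z w ^ i * ev H z w ^ j)"
    using F[OF xG xH] infsumI by (metis (no_types))
  also have "\<dots> = infsum (\<lambda>ij. infsum (\<lambda>kl. V ij kl) UNIV) UNIV"
    using lhs by (simp add: case_prod_unfold)
  also have "\<dots> = infsum (\<lambda>kl. infsum (\<lambda>ij. V ij kl) UNIV) UNIV" by (rule swap)
  also have "\<dots> = ev (comp2 B G H) z w"
    using rhs by (simp add: ev_def case_prod_unfold)
  finally show "F (ev G z w) (ev H z w) = ev (comp2 B G H) z w" .
qed




definition supp2 :: "(nat \<Rightarrow> nat \<Rightarrow> complex) \<Rightarrow> nat \<Rightarrow> nat \<Rightarrow> real \<Rightarrow> bool" where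
  "supp2 c A B t \<longleftrightarrow> (\<forall>k l. c k l \<noteq> 0 \<longrightarrow> A \<le> k \<and> real A + t * real B \<le> real k + t * real l)"

lemma sum1_single:
  fixes f :: "nat \<Rightarrow> 'a::comm_monoid_add"
  assumes "A \<le> K" "\<And>a. a \<le> K \<Longrightarrow> a \<noteq> A \<Longrightarrow> f a = 0"
  shows "(\<Sum>a\<le>K. f a) = f A"
proof -
  have "(\<Sum>a\<le>K. f a) = (\<Sum>a\<le>K. if a = A then f A else 0)"
    by (rule sum.cong) (use assms in auto)
  also have "\<dots> = f A" using assms(1) by simp
  finally show ?thesis .
qed

lemma sum2_single:
  fixes f :: "nat \<Rightarrow> nat \<Rightarrow> 'a::comm_monoid_add"
  assumes "A \<le> K" "B \<le> L" "\<And>a b. a \<le> K \<Longrightarrow> b \<le> L \<Longrightarrow> (a,b) \<noteq> (A,B) \<Longrightarrow> f a b = 0"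
  shows "(\<Sum>a\<le>K. \<Sum>b\<le>L. f a b) = f A B"
proof -
  have "(\<Sum>a\<le>K. \<Sum>b\<le>L. f a b) = (\<Sum>b\<le>L. f A b)"
    by (rule sum1_single) (use assms in \<open>auto intro!: sum.neutral\<close>)
  also have "\<dots> = f A B"
    by (rule sum1_single) (use assms in auto)
  finally show ?thesis .
qed

lemma conv2_nonzero:
  assumes "conv2 c d k l \<noteq> 0"
  shows "\<exists>a b. a \<le> k \<and> b \<le> l \<and> c a b \<noteq> 0 \<and> d (k-a) (l-b) \<noteq> 0"
proof (rule ccontr)
  assume "\<not> ?thesis"
  then have "\<And>a b. a \<le> k \<Longrightarrow> b \<le> l \<Longrightarrow> c a b * d (k-a) (l-b) = 0" by force
  then have "conv2 c d k l = 0" unfolding conv2_def by (simp add: sum.neutral)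
  then show False using assms by simp
qed

lemma supp2_conv:
  assumes c: "supp2 c A1 B1 t" and d: "supp2 d A2 B2 t"
  shows "supp2 (conv2 c d) (A1+A2) (B1+B2) t"
  unfolding supp2_def
proof (intro allI impI)
  fix k l assume "conv2 c d k l \<noteq> 0"
  then obtain a b where ab: "a \<le> k" "b \<le> l" "c a b \<noteq> 0" "d (k-a) (l-b) \<noteq> 0"
    using conv2_nonzero by blast
  have 1: "A1 \<le> a" "real A1 + t * real B1 \<le> real a + t * real b"
    using c ab unfolding supp2_def by blast+
  have 2: "A2 \<le> k - a" "real A2 + t * real B2 \<le> real (k-a) + t * real (l-b)"
    using d ab unfolding supp2_def by blast+
  have 3: "real (k-a) = real k - real a" "real (l-b) = real l - real b" using ab by auto
  show "A1 + A2 \<le> k \<and> real (A1 + A2) + t * real (B1 + B2) \<le> real k + t * real l"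
    using 1 2 ab unfolding 3 by (auto simp: algebra_simps)
qed

lemma conv2_apex:
  assumes c: "supp2 c A1 B1 t" and d: "supp2 d A2 B2 t" and t: "t > 0"
  shows "conv2 c d (A1+A2) (B1+B2) = c A1 B1 * d A2 B2"
proof -
have "conv2 c d (A1+A2) (B1+B2) = c A1 B1 * d (A1+A2-A1) (B1+B2-B1)"
  unfolding conv2_def
proof (rule sum2_single[where f = "\<lambda>a b. c a b * d (A1 + A2 - a) (B1 + B2 - b)" and A=A1 and B=B1])
  show "A1 \<le> A1 + A2" "B1 \<le> B1 + B2" by simp_all
  fix a b assume ab: "a \<le> A1 + A2" "b \<le> B1 + B2" "(a,b) \<noteq> (A1,B1)"
  show "c a b * d (A1 + A2 - a) (B1 + B2 - b) = 0"
  proof (rule ccontr)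
    assume "\<not> ?thesis"
    then have nz: "c a b \<noteq> 0" "d (A1 + A2 - a) (B1 + B2 - b) \<noteq> 0" by auto
    have 1: "A1 \<le> a" "real A1 + t * real B1 \<le> real a + t * real b"
      using c nz unfolding supp2_def by blast+
    have 2: "A2 \<le> A1 + A2 - a" "real A2 + t * real B2 \<le> real (A1 + A2 - a) + t * real (B1 + B2 - b)"
      using d nz unfolding supp2_def by blast+
    have a: "a = A1" using 1(1) 2(1) ab(1) by arith
    have "t * real B1 \<le> t * real b" using 1 a by simp
    then have b1: "B1 \<le> b" using t by simp
    have "real (B1 + B2 - b) = real B1 + real B2 - real b" using ab by auto
    then have "t * real B2 \<le> t * (real B1 + real B2 - real b)" using 2 a by simp
    then have "real B2 \<le> real B1 + real B2 - real b" using t by simp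
    then have "b \<le> B1" by linarith
    then show False using b1 a ab by simp
  qed
qed
then show ?thesis by simp
qed

lemma supp2_unit: "supp2 unit2 0 0 t"
  unfolding supp2_def by (auto simp: unit2_def)

lemma cpow_supp:
  assumes c: "supp2 c A B t" and t: "t > 0"
  shows "supp2 (cpow c i) (i*A) (i*B) t \<and> cpow c i (i*A) (i*B) = c A B ^ i"
proof (induction i)
  case 0
  have "unit2 0 0 = 1" by (simp add: unit2_def)
  then show ?case using supp2_unit[of t] by simp
next
  case (Suc i)
  have s: "supp2 (cpow c (Suc i)) (A + i*A) (B + i*B) t"
    using supp2_conv[OF c, of "cpow c i" "i*A" "i*B"] Suc by simp
  have v: "cpow c (Suc i) (A + i*A) (B + i*B) = c A B * c A B ^ i"
    using conv2_apex[OF c _ t, of "cpow c i" "i*A" "i*B"] Suc by simp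
  show ?case using s v by simp
qed

lemma mono2_supp:
  assumes G: "supp2 G A1 B1 t" and H: "supp2 H A2 B2 t" and t: "t > 0"
  shows "supp2 (mono2 G H i j) (i*A1 + j*A2) (i*B1 + j*B2) t"
    "mono2 G H i j (i*A1 + j*A2) (i*B1 + j*B2) = G A1 B1 ^ i * H A2 B2 ^ j"
proof -
  have g: "supp2 (cpow G i) (i*A1) (i*B1) t" "cpow G i (i*A1) (i*B1) = G A1 B1 ^ i"
    using cpow_supp[OF G t] by blast+
  have h: "supp2 (cpow H j) (j*A2) (j*B2) t" "cpow H j (j*A2) (j*B2) = H A2 B2 ^ j"
    using cpow_supp[OF H t] by blast+
  show "supp2 (mono2 G H i j) (i*A1 + j*A2) (i*B1 + j*B2) t"
    unfolding mono2_def by (rule supp2_conv[OF g(1) h(1)])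
  show "mono2 G H i j (i*A1 + j*A2) (i*B1 + j*B2) = G A1 B1 ^ i * H A2 B2 ^ j"
    unfolding mono2_def using conv2_apex[OF g(1) h(1) t] g(2) h(2) by simp
qed

lemma comp2_nonzero:
  assumes "comp2 B G H k l \<noteq> 0"
  shows "\<exists>i j. B i j \<noteq> 0 \<and> mono2 G H i j k l \<noteq> 0"
proof (rule ccontr)
  assume "\<not> ?thesis"
  then have "comp2 B G H k l = 0" unfolding comp2_def by (auto intro!: infsum_0)
  then show False using assms by simp
qed

lemma comp2_single:
  assumes "\<And>i j. (i,j) \<noteq> (i0,j0) \<Longrightarrow> B i j = 0 \<or> mono2 G H i j k l = 0"
  shows "comp2 B G H k l = B i0 j0 * mono2 G H i0 j0 k l"
proof -
  have z: "(\<lambda>(i,j). B i j * mono2 G H i j k l) x = 0" if "x \<noteq> (i0,j0)" for x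
    using assms[of "fst x" "snd x"] that by (cases x) auto
  show ?thesis unfolding comp2_def using infsum_single[of "(i0,j0)", OF z] by simp
qed




lemma powser_coeff0_zero:
  fixes b :: "nat \<Rightarrow> complex"
  assumes s: "s > 0" and sm: "\<And>x. x \<noteq> 0 \<Longrightarrow> norm x < s \<Longrightarrow> (\<lambda>m. b m * x^m) sums 0"
  shows "b 0 = 0"
proof -
  have "((\<lambda>x::complex. 0::complex) \<longlongrightarrow> b 0) (at 0)"
    by (rule powser_limit_0_strong[where a=b and f="\<lambda>_. 0", OF s sm])
  from LIM_const_eq[OF this] show ?thesis by simp
qed

lemma powser_unique0:
  fixes a :: "nat \<Rightarrow> complex"
  assumes s: "s > 0" and sm: "\<And>x. norm x < s \<Longrightarrow> (\<lambda>n. a n * x^n) sums 0"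
  shows "a n = 0"
proof -
  have P: "\<forall>x. x \<noteq> 0 \<longrightarrow> norm x < s \<longrightarrow> (\<lambda>m. a (m+n) * x^m) sums 0" for n
  proof (induction n)
    case 0
    then show ?case using sm by simp
  next
    case (Suc n)
    have an: "a n = 0"
      using powser_coeff0_zero[OF s, of "\<lambda>m. a (m+n)"] Suc by simp
    show ?case
    proof (intro allI impI)
      fix x :: complex assume x: "x \<noteq> 0" "norm x < s"
      have sn: "(\<lambda>m. a (m+n) * x^m) sums 0" using Suc x by blast
      then have sumb: "summable (\<lambda>m. a (m+n) * x^m)" by (rule sums_summable)
      have "suminf (\<lambda>m. a (Suc m + n) * x^m) * x = suminf (\<lambda>m. a (m+n) * x^m) - a (0+n)"
        using powser_split_head(2)[OF sumb] by simp
      then have "suminf (\<lambda>m. a (Suc m + n) * x^m) * x = 0" using sn an by (simp add: sums_iff)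
      then have z: "suminf (\<lambda>m. a (Suc m + n) * x^m) = 0" using x by simp
      have "summable (\<lambda>m. a (Suc m + n) * x^m)" using powser_split_head(3)[OF sumb] by simp
      then have "(\<lambda>m. a (Suc m + n) * x^m) sums 0" using z by (metis summable_sums)
      then show "(\<lambda>m. a (m + Suc n) * x^m) sums 0" by simp
    qed
  qed
  show ?thesis using powser_coeff0_zero[OF s, of "\<lambda>m. a (m+n)"] P[of n] by simp
qed

lemma absum_nonneg_rho:
  assumes "norm z \<le> \<rho>" shows "\<rho> \<ge> 0"
  using assms norm_ge_zero order.trans by blast

lemma coeff_zero:
  assumes r: "\<rho> > 0" and c: "absum c \<rho>"
    and z: "\<And>z w. norm z < \<rho> \<Longrightarrow> norm w < \<rho> \<Longrightarrow> ((\<lambda>(k,l). c k l * z^k * w^l) has_sum 0) UNIV"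
  shows "c k l = 0"
proof -
  define A where "A = (\<lambda>k w. infsum (\<lambda>l. c k l * w^l) UNIV)"
  define z0 where "z0 = complex_of_real (\<rho>/2)"
  have z0: "norm z0 < \<rho>" "norm z0 \<le> \<rho>" "z0 \<noteq> 0" using r by (auto simp: z0_def)
  have lsum: "(\<lambda>l. c k l * w^l) summable_on UNIV" if w: "norm w < \<rho>" for k w
  proof -
    have "(\<lambda>(k,l). c k l * z0^k * w^l) summable_on UNIV"
      using ev_summable(2)[OF c z0(2)] w by simp
    then have "(\<lambda>(k,l). c k l * z0^k * w^l) summable_on Sigma UNIV (\<lambda>_. UNIV)" by simp
    then have "(\<lambda>l. c k l * z0^k * w^l) summable_on UNIV"
      using summable_on_SigmaD1[of "\<lambda>k l. c k l * z0^k * w^l" UNIV "\<lambda>_. UNIV" k] by simp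
    then have "(\<lambda>l. (c k l * z0^k * w^l) * (1 / z0^k)) summable_on UNIV"
      by (rule summable_on_cmult_left)
    moreover have "(c k l * z0^k * w^l) * (1 / z0^k) = c k l * w^l" for l using z0(3) by simp
    ultimately show ?thesis by simp
  qed
  have A0: "A k w = 0" if w: "norm w < \<rho>" for k w
  proof -
    have "(\<lambda>k. A k w * x^k) sums 0" if x: "norm x < \<rho>" for x
    proof -
      have f: "(\<lambda>(k,l). c k l * x^k * w^l) summable_on (UNIV \<times> UNIV)"
        using ev_summable(2)[OF c] x w by simp
      have "infsum (\<lambda>(k,l). c k l * x^k * w^l) (UNIV \<times> UNIV) = 0"
        using z[OF x w] infsumI by simp
      moreover have "infsum (\<lambda>k. infsum (\<lambda>l. c k l * x^k * w^l) UNIV) UNIV = infsum (\<lambda>(k,l). c k l * x^k * w^l) (UNIV \<times> UNIV)"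
        using infsum_Sigma'_banach[of "\<lambda>k l. c k l * x^k * w^l" UNIV "\<lambda>_. UNIV"] f by simp
      moreover have "(\<lambda>k. infsum (\<lambda>l. c k l * x^k * w^l) UNIV) summable_on UNIV"
        using summable_on_Sigma_banach[of "\<lambda>k l. c k l * x^k * w^l" UNIV "\<lambda>_. UNIV"] f by simp
      moreover have "infsum (\<lambda>l. c k l * x^k * w^l) UNIV = A k w * x^k" for k
      proof -
        have "infsum (\<lambda>l. c k l * x^k * w^l) UNIV = infsum (\<lambda>l. (c k l * w^l) * x^k) UNIV"
          by (rule infsum_cong) (simp add: mult_ac)
        also have "\<dots> = A k w * x^k" unfolding A_def by (rule infsum_cmult_left')
        finally show ?thesis .
      qed
      ultimately have sA: "(\<lambda>k. A k w * x^k) summable_on UNIV" and iA: "infsum (\<lambda>k. A k w * x^k) UNIV = 0"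
        by simp_all
      have "((\<lambda>k. A k w * x^k) has_sum 0) UNIV"
        using has_sum_infsum[OF sA] iA by simp
      then show ?thesis by (rule has_sum_imp_sums)
    qed
    then show ?thesis using powser_unique0[OF r, of "\<lambda>k. A k w"] by blast
  qed
  have "(\<lambda>l. c k l * w^l) sums 0" if w: "norm w < \<rho>" for w
  proof -
    have "((\<lambda>l. c k l * w^l) has_sum A k w) UNIV"
      unfolding A_def using lsum[OF w] by (rule has_sum_infsum)
    then show ?thesis using A0[OF w] has_sum_imp_sums by simp
  qed
  then show ?thesis using powser_unique0[OF r, of "c k"] by blast
qed

lemma pseries_rep:
  assumes "pseries2_at0 F c"
  shows "\<exists>\<rho>>0. absum c \<rho> \<and> (\<forall>z w. norm z \<le> \<rho> \<longrightarrow> norm w \<le> \<rho> \<longrightarrow> F z w = ev c z w)"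
proof -
  obtain r where r: "r > 0" and hs: "\<And>z w. cmod z < r \<Longrightarrow> cmod w < r \<Longrightarrow>
       ((\<lambda>(i,j). c i j * z ^ i * w ^ j) has_sum F z w) UNIV"
    using assms unfolding pseries2_at0_def by blast
  define \<rho> where "\<rho> = r/2"
  have rp: "\<rho> > 0" "\<rho> < r" using r by (auto simp: \<rho>_def)
  have "((\<lambda>(i,j). c i j * (complex_of_real \<rho>) ^ i * (complex_of_real \<rho>) ^ j) has_sum F \<rho> \<rho>) UNIV"
    using hs[of "complex_of_real \<rho>" "complex_of_real \<rho>"] rp by simp
  then have "(\<lambda>(i,j). c i j * (complex_of_real \<rho>) ^ i * (complex_of_real \<rho>) ^ j) summable_on UNIV"
    by (auto simp: summable_on_def)
  then have "(\<lambda>x. norm ((\<lambda>(i,j). c i j * (complex_of_real \<rho>) ^ i * (complex_of_real \<rho>) ^ j) x)) summable_on UNIV"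
    using summable_on_iff_abs_summable_on_complex by blast
  then have a: "absum c \<rho>"
    unfolding absum_def using rp by (simp add: case_prod_unfold norm_mult norm_power)
  have "F z w = ev c z w" if "norm z \<le> \<rho>" "norm w \<le> \<rho>" for z w
    using hs[of z w] that rp unfolding ev_def by (simp add: infsumI)
  then show ?thesis using a rp by blast
qed

lemma rep_pseries:
  assumes r: "\<rho> > 0" and c: "absum c \<rho>" and F: "\<And>z w. norm z \<le> \<rho> \<Longrightarrow> norm w \<le> \<rho> \<Longrightarrow> F z w = ev c z w"
  shows "pseries2_at0 F c"
  unfolding pseries2_at0_def
proof (intro exI[of _ \<rho>] conjI allI impI r)
  fix z w :: complex assume z: "norm z < \<rho>" and w: "norm w < \<rho>"
  have "(\<lambda>(k,l). c k l * z^k * w^l) summable_on UNIV"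
    using ev_summable(2)[OF c] z w by simp
  then show "((\<lambda>(i,j). c i j * z ^ i * w ^ j) has_sum F z w) UNIV"
    using F[of z w] z w unfolding ev_def by (simp add: has_sum_infsum)
qed

lemma coeff_unique:
  assumes p: "pseries2_at0 F c" and r: "\<rho> > 0" and d: "absum d \<rho>"
    and F: "\<And>z w. norm z \<le> \<rho> \<Longrightarrow> norm w \<le> \<rho> \<Longrightarrow> F z w = ev d z w"
  shows "c k l = d k l"
proof -
  obtain \<rho>1 where r1: "\<rho>1 > 0" and c1: "absum c \<rho>1"
    and F1: "\<And>z w. norm z \<le> \<rho>1 \<Longrightarrow> norm w \<le> \<rho>1 \<Longrightarrow> F z w = ev c z w"
    using pseries_rep[OF p] by blast
  define \<sigma> where "\<sigma> = min \<rho> \<rho>1"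
  have s: "\<sigma> > 0" "\<sigma> \<le> \<rho>" "\<sigma> \<le> \<rho>1" using r r1 by (auto simp: \<sigma>_def)
  have cs: "absum c \<sigma>" using absum_mono(1)[OF c1] s by simp
  have ds: "absum d \<sigma>" using absum_mono(1)[OF d] s by simp
  define e where "e = (\<lambda>k l. c k l - d k l)"
  have es: "absum e \<sigma>"
  proof -
    have sm: "(\<lambda>x. (\<lambda>(k,l). norm (c k l) * \<sigma>^k * \<sigma>^l) x + (\<lambda>(k,l). norm (d k l) * \<sigma>^k * \<sigma>^l) x) summable_on UNIV"
      using cs ds unfolding absum_def by (rule summable_on_add)
    have le: "norm (c k l - d k l) * \<sigma>^k * \<sigma>^l \<le> norm (c k l) * \<sigma>^k * \<sigma>^l + norm (d k l) * \<sigma>^k * \<sigma>^l" for k l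
    proof -
      have "norm (c k l - d k l) * (\<sigma>^k * \<sigma>^l) \<le> (norm (c k l) + norm (d k l)) * (\<sigma>^k * \<sigma>^l)"
        by (rule mult_right_mono[OF norm_triangle_ineq4]) (use s in simp)
      then show ?thesis by (simp add: algebra_simps)
    qed
    show ?thesis unfolding absum_def e_def
    proof (rule summable_on_comparison_test[OF sm])
      fix x :: "nat \<times> nat"
      show "(\<lambda>(k,l). norm (c k l - d k l) * \<sigma>^k * \<sigma>^l) x \<le> (\<lambda>(k,l). norm (c k l) * \<sigma>^k * \<sigma>^l) x + (\<lambda>(k,l). norm (d k l) * \<sigma>^k * \<sigma>^l) x"
        using le[of "fst x" "snd x"] by (simp add: case_prod_unfold)
      show "0 \<le> (\<lambda>(k,l). norm (c k l - d k l) * \<sigma>^k * \<sigma>^l) x"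
        using s by (simp add: case_prod_unfold)
    qed
  qed
  have "((\<lambda>(k,l). e k l * z^k * w^l) has_sum 0) UNIV" if z: "norm z < \<sigma>" and w: "norm w < \<sigma>" for z w
  proof -
    have h1: "((\<lambda>(k,l). c k l * z^k * w^l) has_sum ev c z w) UNIV"
      using ev_summable(2)[OF cs] z w unfolding ev_def by (simp add: has_sum_infsum)
    have h2: "((\<lambda>(k,l). d k l * z^k * w^l) has_sum ev d z w) UNIV"
      using ev_summable(2)[OF ds] z w unfolding ev_def by (simp add: has_sum_infsum)
    have h2': "((\<lambda>x. - (\<lambda>(k,l). d k l * z^k * w^l) x) has_sum - ev d z w) UNIV"
      using h2 by (subst has_sum_uminus) simp
    have "((\<lambda>x. (\<lambda>(k,l). c k l * z^k * w^l) x + - (\<lambda>(k,l). d k l * z^k * w^l) x) has_sum (ev c z w + - ev d z w)) UNIV"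
      by (rule has_sum_add[OF h1 h2'])
    moreover have "ev c z w = ev d z w" using F[of z w] F1[of z w] z w s by simp
    ultimately show ?thesis by (simp add: e_def case_prod_unfold algebra_simps)
  qed
  then have "e k l = 0" using coeff_zero[OF s(1) es] by blast
  then show ?thesis by (simp add: e_def)
qed




definition quadU :: "(nat \<Rightarrow> nat \<Rightarrow> complex) \<Rightarrow> (real \<times> real) set" where
  "quadU c = (\<Union>(i,j)\<in>{(i,j). c i j \<noteq> 0}. {v. fst v \<ge> real i \<and> snd v \<ge> real j})"

lemma np_def': "newton_polygon c = convex hull (quadU c)"
  unfolding newton_polygon_def quadU_def ..

lemma quadU_iff: "v \<in> quadU c \<longleftrightarrow> (\<exists>i j. c i j \<noteq> 0 \<and> fst v \<ge> real i \<and> snd v \<ge> real j)"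
  unfolding quadU_def by auto

lemma convex_halfplane2: "convex {v::real\<times>real. a * fst v + b * snd v \<ge> K}"
  unfolding convex_def
proof (intro ballI allI impI, simp only: mem_Collect_eq)
  fix x y :: "real \<times> real" and u v :: real
  assume x: "a * fst x + b * snd x \<ge> K" and y: "a * fst y + b * snd y \<ge> K"
    and uv: "0 \<le> u" "0 \<le> v" "u + v = 1"
  have "a * fst (u *\<^sub>R x + v *\<^sub>R y) + b * snd (u *\<^sub>R x + v *\<^sub>R y) =
      u * (a * fst x + b * snd x) + v * (a * fst y + b * snd y)"
    by (simp add: algebra_simps)
  also have "\<dots> \<ge> u * K + v * K"
    using uv x y by (intro add_mono mult_left_mono) auto
  moreover have "u * K + v * K = K" using uv by (metis distrib_right mult_1)
  ultimately show "K \<le> a * fst (u *\<^sub>R x + v *\<^sub>R y) + b * snd (u *\<^sub>R x + v *\<^sub>R y)"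
    by linarith
qed

lemma poly_sub_half:
  assumes a: "a \<ge> 0" and b: "b \<ge> 0"
    and s: "\<And>i j. c i j \<noteq> 0 \<Longrightarrow> a * real i + b * real j \<ge> K"
  shows "newton_polygon c \<subseteq> {v. a * fst v + b * snd v \<ge> K}"
  unfolding np_def'
proof (rule hull_minimal)
  show "convex {v. K \<le> a * fst v + b * snd v}" by (rule convex_halfplane2)
  show "quadU c \<subseteq> {v. K \<le> a * fst v + b * snd v}"
  proof
    fix v assume "v \<in> quadU c"
    then obtain i j where ij: "c i j \<noteq> 0" "fst v \<ge> real i" "snd v \<ge> real j"
      unfolding quadU_iff by blast
    have "a * real i + b * real j \<le> a * fst v + b * snd v"
      using ij a b by (intro add_mono mult_left_mono) auto
    then show "v \<in> {v. K \<le> a * fst v + b * snd v}" using s[OF ij(1)] by simp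
  qed
qed

lemma supp_in_poly: "c i j \<noteq> 0 \<Longrightarrow> (real i, real j) \<in> newton_polygon c"
  unfolding np_def' by (rule hull_inc) (auto simp: quadU_iff)

lemma ext_pt:
  fixes P :: "(real \<times> real) set"
  assumes P1: "P \<subseteq> {v. a1 * fst v + b1 * snd v \<ge> K1}" and P2: "P \<subseteq> {v. a2 * fst v + b2 * snd v \<ge> K2}"
    and x: "x \<in> P" and x1: "a1 * fst x + b1 * snd x = K1" and x2: "a2 * fst x + b2 * snd x = K2"
    and det: "a1 * b2 - a2 * b1 \<noteq> 0"
  shows "x extreme_point_of P"
  unfolding extreme_point_of_def
proof (intro conjI x ballI notI)
  fix p q assume p: "p \<in> P" and q: "q \<in> P" and xs: "x \<in> open_segment p q"
  then obtain u where u: "0 < u" "u < 1" and pq: "p \<noteq> q" and xe: "x = (1 - u) *\<^sub>R p + u *\<^sub>R q"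
    unfolding in_segment by blast
  have fx: "fst x = (1-u) * fst p + u * fst q" and sx: "snd x = (1-u) * snd p + u * snd q"
    using xe by auto
  have eqs: "a1 * fst p + b1 * snd p = K1 \<and> a1 * fst q + b1 * snd q = K1"
    if P: "P \<subseteq> {v. a1 * fst v + b1 * snd v \<ge> K1}" and x1: "a1 * fst x + b1 * snd x = K1" for a1 b1 K1
  proof -
    have hp: "a1 * fst p + b1 * snd p \<ge> K1" and hq: "a1 * fst q + b1 * snd q \<ge> K1"
      using P p q by auto
    have e: "(1-u) * (a1 * fst p + b1 * snd p) + u * (a1 * fst q + b1 * snd q) = K1"
      using x1 unfolding fx sx by (simp add: algebra_simps)
    have "(1-u) * (a1 * fst p + b1 * snd p) \<ge> (1-u) * K1" using hp u by (intro mult_left_mono) auto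
    moreover have "u * (a1 * fst q + b1 * snd q) \<ge> u * K1" using hq u by (intro mult_left_mono) auto
    moreover have "(1-u) * (a1 * fst p + b1 * snd p) > (1-u) * K1" if "a1 * fst p + b1 * snd p > K1"
      using that u by (intro mult_strict_left_mono) auto
    moreover have "u * (a1 * fst q + b1 * snd q) > u * K1" if "a1 * fst q + b1 * snd q > K1"
      using that u by (intro mult_strict_left_mono) auto
    moreover have sumK: "(1-u) * K1 + u * K1 = K1" by (simp add: algebra_simps)
    ultimately show ?thesis using e hp hq
      by (metis (no_types, lifting) add_less_le_mono add_le_less_mono order_less_irrefl order_le_less)
  qed
  have e1: "a1 * fst p + b1 * snd p = K1" "a1 * fst q + b1 * snd q = K1" using eqs[OF P1 x1] by auto
  have e2: "a2 * fst p + b2 * snd p = K2" "a2 * fst q + b2 * snd q = K2" using eqs[OF P2 x2] by auto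
  define d1 where "d1 = fst p - fst q"
  define d2 where "d2 = snd p - snd q"
  have l1: "a1 * d1 + b1 * d2 = 0" using e1 unfolding d1_def d2_def by (simp add: algebra_simps)
  have l2: "a2 * d1 + b2 * d2 = 0" using e2 unfolding d1_def d2_def by (simp add: algebra_simps)
  have "(a1 * b2 - a2 * b1) * d1 = b2 * (a1 * d1 + b1 * d2) - b1 * (a2 * d1 + b2 * d2)"
    by (simp add: algebra_simps)
  then have "d1 = 0" using l1 l2 det by simp
  have "(a1 * b2 - a2 * b1) * d2 = a1 * (a2 * d1 + b2 * d2) - a2 * (a1 * d1 + b1 * d2)"
    by (simp add: algebra_simps)
  then have "d2 = 0" using l1 l2 det by simp
  then show False using \<open>d1 = 0\<close> pq unfolding d1_def d2_def by (simp add: prod_eq_iff)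
qed

lemma poly_up:
  assumes v: "v \<in> newton_polygon c" and dd: "fst dd \<ge> 0" "snd dd \<ge> 0"
  shows "dd + v \<in> newton_polygon c"
proof -
  have "dd + v \<in> (\<lambda>x. dd + x) ` (convex hull quadU c)" using v by (simp add: np_def')
  also have "\<dots> = convex hull ((\<lambda>x. dd + x) ` quadU c)" by (rule convex_hull_translation[symmetric])
  also have "\<dots> \<subseteq> convex hull quadU c"
  proof (rule hull_mono, rule subsetI)
    fix y assume "y \<in> (\<lambda>x. dd + x) ` quadU c"
    then obtain x where x: "x \<in> quadU c" "y = dd + x" by blast
    then obtain i j where "c i j \<noteq> 0" "fst x \<ge> real i" "snd x \<ge> real j" unfolding quadU_iff by blast
    then show "y \<in> quadU c" unfolding quadU_iff using x dd by (intro exI[of _ i] exI[of _ j]) auto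
  qed
  finally show ?thesis by (simp add: np_def')
qed

lemma not_ext_above:
  assumes w: "w \<in> newton_polygon c" and dd: "fst dd \<ge> 0" "snd dd \<ge> 0" "dd \<noteq> 0"
  shows "\<not> (w + dd) extreme_point_of newton_polygon c"
proof
  assume e: "(w + dd) extreme_point_of newton_polygon c"
  have w2: "(2 *\<^sub>R dd) + w \<in> newton_polygon c" using poly_up[OF w, of "2 *\<^sub>R dd"] dd by auto
  have "w + dd \<in> open_segment w ((2 *\<^sub>R dd) + w)"
    unfolding in_segment using dd(3)
    by (intro conjI exI[of _ "1/2"]) (auto simp: algebra_simps prod_eq_iff)
  then show False using e w w2 unfolding extreme_point_of_def by blast
qed

lemma ext_in_supp:
  assumes "v extreme_point_of newton_polygon c"
  shows "\<exists>i j. c i j \<noteq> 0 \<and> v = (real i, real j)"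
proof -
  have "v \<in> quadU c" using extreme_point_of_convex_hull assms by (simp add: np_def')
  then obtain i j where ij: "c i j \<noteq> 0" "fst v \<ge> real i" "snd v \<ge> real j" unfolding quadU_iff by blast
  define dd where "dd = v - (real i, real j)"
  have dd: "fst dd \<ge> 0" "snd dd \<ge> 0" using ij by (auto simp: dd_def)
  have "v = (real i, real j) + dd" by (simp add: dd_def)
  moreover have "dd = 0"
  proof (rule ccontr)
    assume "dd \<noteq> 0"
    then have "\<not> ((real i, real j) + dd) extreme_point_of newton_polygon c"
      using not_ext_above[OF supp_in_poly[of c i j, OF ij(1)] dd] by blast
    then show False using assms \<open>v = (real i, real j) + dd\<close> by simp
  qed
  ultimately show ?thesis using ij by auto
qed




lemma vertex_in_poly: "v \<in> newton_vertices c \<Longrightarrow> v \<in> newton_polygon c"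
  unfolding newton_vertices_def extreme_point_of_def by simp

lemma b_facts:
  fixes b :: "nat \<Rightarrow> nat \<Rightarrow> complex"
  assumes v1: "(real n1, real m1) \<in> newton_vertices b"
    and v1_min: "\<forall>v\<in>newton_vertices b. real n1 \<le> fst v"
    and v2: "(real n2, real m2) \<in> newton_vertices b"
    and n12: "n1 < n2"
    and v2_next: "\<forall>v\<in>newton_vertices b. fst v \<le> real n1 \<or> real n2 \<le> fst v"
  shows "b n1 m1 \<noteq> 0" "m2 < m1" "\<forall>i j. b i j \<noteq> 0 \<longrightarrow> n1 \<le> i"
    "\<forall>i j. b i j \<noteq> 0 \<longrightarrow> real n1 + (real n2 - real n1) / (real m1 - real m2) * real m1
        \<le> real i + (real n2 - real n1) / (real m1 - real m2) * real j"
proof -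
  let ?P = "newton_polygon b"
  have e1: "(real n1, real m1) extreme_point_of ?P" using v1 by (simp add: newton_vertices_def)
  have e2: "(real n2, real m2) extreme_point_of ?P" using v2 by (simp add: newton_vertices_def)
  have P1: "(real n1, real m1) \<in> ?P" using e1 by (simp add: extreme_point_of_def)
  have P2: "(real n2, real m2) \<in> ?P" using e2 by (simp add: extreme_point_of_def)
  show B0: "b n1 m1 \<noteq> 0" using ext_in_supp[OF e1] by auto
  show B3: "m2 < m1"
  proof (rule ccontr)
    assume "\<not> m2 < m1"
    then have "(real n2, real m2) = (real n1, real m1) + (real n2 - real n1, real m2 - real m1)"
      by simp
    moreover have "\<not> ((real n1, real m1) + (real n2 - real n1, real m2 - real m1)) extreme_point_of ?P"
      using \<open>\<not> m2 < m1\<close> n12 by (intro not_ext_above[OF P1]) (auto simp: zero_prod_def)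
    ultimately show False using e2 by simp
  qed
  show B1a: "\<forall>i j. b i j \<noteq> 0 \<longrightarrow> n1 \<le> i"
  proof (intro allI impI, rule ccontr)
    fix i' j' assume nz: "b i' j' \<noteq> 0" and lt: "\<not> n1 \<le> i'"
    define i0 where "i0 = (LEAST i. \<exists>j. b i j \<noteq> 0)"
    have ex0: "\<exists>j. b i0 j \<noteq> 0" unfolding i0_def by (rule LeastI_ex) (use nz in blast)
    have i0le: "i0 \<le> i" if "b i j \<noteq> 0" for i j unfolding i0_def using that by (blast intro: Least_le)
    define j0 where "j0 = (LEAST j. b i0 j \<noteq> 0)"
    have nz0: "b i0 j0 \<noteq> 0" unfolding j0_def by (rule LeastI_ex) (use ex0 in blast)
    have j0le: "j0 \<le> j" if "b i0 j \<noteq> 0" for j unfolding j0_def using that by (rule Least_le)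
    define t where "t = 1 / (real j0 + 1)"
    have t: "t > 0" "t * real j0 < 1" by (auto simp: t_def field_simps)
    have H1: "?P \<subseteq> {v. 1 * fst v + 0 * snd v \<ge> real i0}"
      by (rule poly_sub_half) (auto dest: i0le)
    have H2: "?P \<subseteq> {v. 1 * fst v + t * snd v \<ge> real i0 + t * real j0}"
    proof (rule poly_sub_half)
      show "0 \<le> (1::real)" "0 \<le> t" using t by auto
      fix i j assume b: "b i j \<noteq> 0"
      show "real i0 + t * real j0 \<le> 1 * real i + t * real j"
      proof (cases "i = i0")
        case True
        then have "j0 \<le> j" using b j0le by simp
        then have "t * real j0 \<le> t * real j" using t by (intro mult_left_mono) auto
        then show ?thesis using True by simp
      next
        case False
        then have "i0 + 1 \<le> i" using i0le[OF b] by simp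
        moreover have "t * real j \<ge> 0" using t by simp
        ultimately show ?thesis using t by linarith
      qed
    qed
    have "(real i0, real j0) extreme_point_of ?P"
      by (rule ext_pt[OF H1 H2 supp_in_poly[of b i0 j0, OF nz0]]) (use t in auto)
    then have "real n1 \<le> real i0" using v1_min by (auto simp: newton_vertices_def)
    then show False using i0le[OF nz] lt by simp
  qed
  have B1c: "m1 \<le> j" if "b n1 j \<noteq> 0" for j
  proof (rule ccontr)
    assume "\<not> m1 \<le> j"
    then have "\<not> ((real n1, real j) + (0, real m1 - real j)) extreme_point_of ?P"
      by (intro not_ext_above[OF supp_in_poly[of b n1 j, OF that]]) (auto simp: zero_prod_def)
    then show False using e1 by simp
  qed
  define A where "A = real m1 - real m2"
  define Bc where "Bc = real n2 - real n1"
  have A: "A > 0" using B3 by (simp add: A_def)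
  have Bc: "Bc > 0" using n12 by (simp add: Bc_def)
  have c0eq: "A * real n1 + Bc * real m1 = A * real n2 + Bc * real m2"
    by (simp add: A_def Bc_def algebra_simps)
  define \<phi> where "\<phi> = (\<lambda>i j. (m1 - m2) * i + (n2 - n1) * j)"
  have \<phi>r: "real (\<phi> i j) = A * real i + Bc * real j" for i j
    using B3 n12 by (simp add: \<phi>_def A_def Bc_def of_nat_diff)
  have B1b: "\<phi> n1 m1 \<le> \<phi> i j" if "b i j \<noteq> 0" for i j
  proof (rule ccontr)
    assume lt0: "\<not> \<phi> n1 m1 \<le> \<phi> i j"
    define M where "M = (LEAST m. \<exists>i j. b i j \<noteq> 0 \<and> \<phi> i j = m)"
    have Mex: "\<exists>i j. b i j \<noteq> 0 \<and> \<phi> i j = M" unfolding M_def by (rule LeastI_ex) (use that in blast)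
    have Mle: "M \<le> \<phi> i j" if "b i j \<noteq> 0" for i j unfolding M_def using that by (blast intro: Least_le)
    have Mlt: "M < \<phi> n1 m1" using Mle[OF that] lt0 by simp
    define ist where "ist = (LEAST i. \<exists>j. b i j \<noteq> 0 \<and> \<phi> i j = M)"
    have isex: "\<exists>j. b ist j \<noteq> 0 \<and> \<phi> ist j = M" unfolding ist_def by (rule LeastI_ex) (use Mex in blast)
    have isle: "ist \<le> i" if "b i j \<noteq> 0" "\<phi> i j = M" for i j unfolding ist_def using that by (blast intro: Least_le)
    obtain jst where jst: "b ist jst \<noteq> 0" "\<phi> ist jst = M" using isex by blast
    define K where "K = real ist"
    have H1: "?P \<subseteq> {v. A * fst v + Bc * snd v \<ge> real M}"
      by (rule poly_sub_half) (use A Bc Mle \<phi>r in \<open>auto simp flip: \<phi>r\<close>)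
    have H2: "?P \<subseteq> {v. (1 + K * A) * fst v + (K * Bc) * snd v \<ge> real ist + K * real M}"
    proof (rule poly_sub_half)
      show "0 \<le> 1 + K * A" "0 \<le> K * Bc" using A Bc by (auto simp: K_def)
      fix i j assume b: "b i j \<noteq> 0"
      have eq: "(1 + K * A) * real i + K * Bc * real j = real i + K * real (\<phi> i j)"
        by (simp add: \<phi>r algebra_simps)
      show "real ist + K * real M \<le> (1 + K * A) * real i + K * Bc * real j"
      proof (cases "\<phi> i j = M")
        case True
        then show ?thesis using isle[OF b True] eq by simp
      next
        case False
        then have "M + 1 \<le> \<phi> i j" using Mle[OF b] by simp
        then have "K * real (M + 1) \<le> K * real (\<phi> i j)" by (intro mult_left_mono) (auto simp: K_def)
        then show ?thesis using eq by (simp add: K_def algebra_simps)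
      qed
    qed
    have ext: "(real ist, real jst) extreme_point_of ?P"
    proof (rule ext_pt[OF H1 H2 supp_in_poly[of b ist jst, OF jst(1)]])
      show "A * fst (real ist, real jst) + Bc * snd (real ist, real jst) = real M"
        using \<phi>r[of "ist" jst] jst(2) by simp
      show "(1 + K * A) * fst (real ist, real jst) + K * Bc * snd (real ist, real jst) = real ist + K * real M"
        using \<phi>r[of "ist" jst] jst(2) by (simp add: K_def algebra_simps)
      have "A * (K * Bc) - (1 + K * A) * Bc = - Bc" by (simp add: algebra_simps)
      then show "A * (K * Bc) - (1 + K * A) * Bc \<noteq> 0" using Bc by simp
    qed
    then have "real ist \<le> real n1 \<or> real n2 \<le> real ist" using v2_next by (auto simp: newton_vertices_def)
    moreover have "n1 \<le> ist" using B1a jst(1) by blast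
    ultimately consider "ist = n1" | "n2 \<le> ist" by linarith
    then show False
    proof cases
      case 1
      have "real (\<phi> n1 jst) < real (\<phi> n1 m1)" using jst(2) Mlt 1 by simp
      then have "Bc * real jst < Bc * real m1" unfolding \<phi>r by simp
      then have "jst < m1" using Bc by (simp add: mult_less_cancel_left_pos)
      then show False using B1c[of jst] jst(1) 1 by simp
    next
      case 2
      define tt where "tt = Bc / (real ist - real n1)"
      have den: "real ist - real n1 > 0" using 2 n12 by simp
      have tt: "0 < tt" "tt \<le> 1" using Bc den 2 by (auto simp: tt_def Bc_def field_simps)
      define u where "u = (1 - tt) *\<^sub>R (real n1, real m1) + tt *\<^sub>R (real ist, real jst)"
      have uP: "u \<in> ?P"
        unfolding u_def using tt P1 supp_in_poly[of b ist jst, OF jst(1)]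
        by (intro convexD[OF convex_convex_hull[of "quadU b"], folded np_def']) auto
      have fu: "fst u = real n2"
      proof -
        have "fst u = real n1 + tt * (real ist - real n1)" by (simp add: u_def algebra_simps)
        also have "tt * (real ist - real n1) = Bc" using den by (simp add: tt_def)
        finally show ?thesis by (simp add: Bc_def)
      qed
      have "A * fst u + Bc * snd u = (1 - tt) * (A * real n1 + Bc * real m1) + tt * (A * real ist + Bc * real jst)"
        by (simp add: u_def algebra_simps)
      also have "A * real ist + Bc * real jst = real M" using \<phi>r[of "ist" jst] jst(2) by simp
      also have "(1 - tt) * (A * real n1 + Bc * real m1) + tt * real M < A * real n1 + Bc * real m1"
      proof -
        have "real M < A * real n1 + Bc * real m1" using Mlt \<phi>r[of n1 m1] by linarith
        then have "tt * real M < tt * (A * real n1 + Bc * real m1)" using tt by simp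
        then show ?thesis by (simp add: algebra_simps)
      qed
      finally have "A * real n2 + Bc * snd u < A * real n2 + Bc * real m2" using c0eq fu by simp
      then have su: "snd u < real m2" using Bc by simp
      have "(real n2, real m2) = u + (0, real m2 - snd u)" using fu by (simp add: prod_eq_iff)
      moreover have "\<not> (u + (0, real m2 - snd u)) extreme_point_of ?P"
        using su by (intro not_ext_above[OF uP]) (auto simp: zero_prod_def)
      ultimately show False using e2 by simp
    qed
  qed
  show "\<forall>i j. b i j \<noteq> 0 \<longrightarrow> real n1 + (real n2 - real n1) / (real m1 - real m2) * real m1
        \<le> real i + (real n2 - real n1) / (real m1 - real m2) * real j"
  proof (intro allI impI)
    fix i j assume "b i j \<noteq> 0"
    then have "real (\<phi> n1 m1) \<le> real (\<phi> i j)" using B1b by simp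
    then have "A * real n1 + Bc * real m1 \<le> A * real i + Bc * real j" unfolding \<phi>r .
    then have "A * (real n1 + Bc / A * real m1) \<le> A * (real i + Bc / A * real j)"
      using A by (simp add: algebra_simps)
    then have "real n1 + Bc / A * real m1 \<le> real i + Bc / A * real j"
      using A by (simp add: mult_le_cancel_left_pos)
    then show "real n1 + (real n2 - real n1) / (real m1 - real m2) * real m1
        \<le> real i + (real n2 - real n1) / (real m1 - real m2) * real j"
      by (simp add: A_def Bc_def)
  qed
qed




fun gam :: "nat \<Rightarrow> nat \<Rightarrow> nat \<Rightarrow> nat \<Rightarrow> nat" where
  "gam n1 d \<delta> 0 = 0"
| "gam n1 d \<delta> (Suc n) = n1 * \<delta>^n + d * gam n1 d \<delta> n"

lemma gam_formula: "gam n1 d \<delta> n = n1 * (\<Sum>k<n. \<delta> ^ (n - 1 - k) * d ^ k)"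
proof (induction n)
  case 0 then show ?case by simp
next
  case (Suc n)
  have "(\<Sum>k<Suc n. \<delta> ^ (Suc n - 1 - k) * d ^ k) = \<delta>^n + (\<Sum>k<n. \<delta> ^ (n - Suc k) * d ^ Suc k)"
    by (subst sum.lessThan_Suc_shift) simp
  also have "(\<Sum>k<n. \<delta> ^ (n - Suc k) * d ^ Suc k) = d * (\<Sum>k<n. \<delta> ^ (n - 1 - k) * d ^ k)"
    by (simp add: sum_distrib_left mult_ac)
  finally show ?case using Suc by (simp add: algebra_simps)
qed

lemma Hgam:
  fixes l2 :: real
  assumes l2: "l2 > 0" and hc: "real n1 \<le> l2 * (real \<delta> - real d)"
  shows "real (gam n1 d \<delta> n) + l2 * real (d^n) \<le> l2 * real (\<delta>^n)"
proof (induction n)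
  case 0 then show ?case by simp
next
  case (Suc n)
  define D where "D = real (\<delta>^n)"
  define g where "g = real (gam n1 d \<delta> n)"
  define e where "e = real (d^n)"
  have IH: "g + l2 * e \<le> l2 * D" using Suc by (simp add: D_def g_def e_def)
  have D0: "D \<ge> 0" by (simp add: D_def)
  have a: "real n1 * D \<le> l2 * (real \<delta> - real d) * D" using hc D0 by (rule mult_right_mono)
  have b: "real d * (g + l2 * e) \<le> real d * (l2 * D)" using IH by (rule mult_left_mono) simp
  have "real (gam n1 d \<delta> (Suc n)) + l2 * real (d^Suc n) = real n1 * D + real d * (g + l2 * e)"
    by (simp add: D_def g_def e_def algebra_simps)
  also have "\<dots> \<le> l2 * (real \<delta> - real d) * D + real d * (l2 * D)" using a b by linarith
  also have "\<dots> = l2 * real (\<delta>^Suc n)" by (simp add: D_def algebra_simps)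
  finally show ?case .
qed

lemma key_ineq:
  fixes i j aa cc D g e l :: real
  assumes "aa \<le> i" "aa + l * cc \<le> i + l * j" "0 \<le> D" "0 \<le> g" "0 \<le> e" "l > 0" "g + l * e \<le> l * D"
  shows "aa * D + cc * g \<le> i * D + j * g" "aa * D + cc * g + l * (cc * e) \<le> i * D + j * g + l * (j * e)"
proof -
  have "aa * D + cc * g \<le> i * D + j * g \<and> aa * D + cc * g + l * (cc * e) \<le> i * D + j * g + l * (j * e)"
  proof (cases "cc \<le> j")
    case True
    have 1: "aa * D \<le> i * D" using assms by (intro mult_right_mono) auto
    have 2: "cc * g \<le> j * g" using assms True by (intro mult_right_mono) auto
    have 3: "l * (cc * e) \<le> l * (j * e)" using assms True by (intro mult_left_mono mult_right_mono) auto
    show ?thesis using 1 2 3 by linarith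
  next
    case False
    have h: "l * (cc - j) \<le> i - aa" using assms by (simp add: algebra_simps)
    have 1: "l * (cc - j) * D \<le> (i - aa) * D" using h assms by (intro mult_right_mono) auto
    have 2: "(cc - j) * (g + l * e) \<le> (cc - j) * (l * D)" using assms False by (intro mult_left_mono) auto
    have 3: "(cc - j) * g \<le> (cc - j) * (g + l * e)"
      using assms False by (intro mult_left_mono) (auto intro: mult_nonneg_nonneg)
    have e1: "(cc - j) * (l * D) = l * (cc - j) * D" by (simp add: algebra_simps)
    have A: "aa * D + cc * g + l * (cc * e) \<le> i * D + j * g + l * (j * e)"
      using 1 2 e1 by (simp add: algebra_simps)
    have B: "aa * D + cc * g \<le> i * D + j * g"
      using 1 2 3 e1 by (simp add: algebra_simps)
    show ?thesis using A B by simp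
  qed
  then show "aa * D + cc * g \<le> i * D + j * g" "aa * D + cc * g + l * (cc * e) \<le> i * D + j * g + l * (j * e)"
    by auto
qed

lemma Nrm_scale:
  assumes c: "absum c \<rho>" and r: "\<rho> > 0" and r1: "0 \<le> \<rho>'" "\<rho>' \<le> \<rho>" and c0: "c 0 0 = 0"
  shows "Nrm c \<rho>' \<le> (\<rho>' / \<rho>) * Nrm c \<rho>"
proof -
  have le: "norm (c k l) * \<rho>'^k * \<rho>'^l \<le> (\<rho>' / \<rho>) * (norm (c k l) * \<rho>^k * \<rho>^l)" for k l
  proof (cases "k + l = 0")
    case True then show ?thesis using c0 by simp
  next
    case False
    have x: "0 \<le> \<rho>' / \<rho>" "\<rho>' / \<rho> \<le> 1" using r r1 by auto
    have "\<rho>'^k * \<rho>'^l = (\<rho>' / \<rho>)^(k+l) * \<rho>^(k+l)"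
      using r by (simp add: power_add power_divide)
    also have "\<dots> \<le> (\<rho>' / \<rho>) * \<rho>^(k+l)"
      using power_decreasing[of 1 "k+l" "\<rho>' / \<rho>"] x False r by (intro mult_right_mono) auto
    finally have "\<rho>'^k * \<rho>'^l \<le> (\<rho>' / \<rho>) * (\<rho>^k * \<rho>^l)" by (simp add: power_add)
    then have "norm (c k l) * (\<rho>'^k * \<rho>'^l) \<le> norm (c k l) * ((\<rho>' / \<rho>) * (\<rho>^k * \<rho>^l))"
      by (rule mult_left_mono) simp
    then show ?thesis by (simp add: mult_ac)
  qed
  have s1: "absum c \<rho>'" using absum_mono(1)[OF c r1] .
  have "Nrm c \<rho>' \<le> (\<Sum>\<^sub>\<infinity>(k,l). (\<rho>' / \<rho>) * (norm (c k l) * \<rho>^k * \<rho>^l))"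
    unfolding Nrm_def
  proof (rule infsum_mono)
    show "(\<lambda>(k,l). norm (c k l) * \<rho>'^k * \<rho>'^l) summable_on UNIV" using s1 by (simp add: absum_def)
    have "(\<lambda>x. (\<rho>' / \<rho>) * (\<lambda>(k,l). norm (c k l) * \<rho>^k * \<rho>^l) x) summable_on UNIV"
      using c unfolding absum_def by (rule summable_on_cmult_right)
    then show "(\<lambda>(k,l). (\<rho>' / \<rho>) * (norm (c k l) * \<rho>^k * \<rho>^l)) summable_on UNIV"
      by (simp add: case_prod_unfold)
    fix x :: "nat \<times> nat"
    show "(case x of (k, l) \<Rightarrow> norm (c k l) * \<rho>' ^ k * \<rho>' ^ l) \<le> (case x of (k, l) \<Rightarrow> \<rho>' / \<rho> * (norm (c k l) * \<rho> ^ k * \<rho> ^ l))"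
      using le[of "fst x" "snd x"] by (simp add: case_prod_unfold)
  qed
  also have "\<dots> = (\<rho>' / \<rho>) * Nrm c \<rho>"
    unfolding Nrm_def using infsum_cmult_right'[of "\<rho>' / \<rho>" "\<lambda>(k,l). norm (c k l) * \<rho>^k * \<rho>^l" UNIV]
    by (simp add: case_prod_unfold)
  finally show ?thesis .
qed

definition zero2 :: "nat \<Rightarrow> nat \<Rightarrow> complex" where "zero2 k l = 0"

lemma zero2_props: "absum zero2 \<rho>" "Nrm zero2 \<rho> = 0" "ev zero2 z w = 0" "supp2 zero2 A B t"
  by (auto simp: absum_def Nrm_def ev_def zero2_def supp2_def case_prod_unfold)

lemma main_inv:
  fixes p :: "complex \<Rightarrow> complex" and q :: "complex \<Rightarrow> complex \<Rightarrow> complex"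
    and b Bp :: "nat \<Rightarrow> nat \<Rightarrow> complex" and l2 :: real
  assumes Fp: "\<And>x y. norm x < Rp \<Longrightarrow> norm y < Rp \<Longrightarrow> ((\<lambda>(i,j). Bp i j * x^i * y^j) has_sum p x) UNIV"
    and Rp: "Rp > 0"
    and Bp1: "\<And>i j. Bp i j \<noteq> 0 \<Longrightarrow> j = 0 \<and> \<delta> \<le> i" and Bp2: "Bp \<delta> 0 \<noteq> 0"
    and Fq: "\<And>x y. norm x < Rq \<Longrightarrow> norm y < Rq \<Longrightarrow> ((\<lambda>(i,j). b i j * x^i * y^j) has_sum q x y) UNIV"
    and Rq: "Rq > 0"
    and bs: "supp2 b n1 m1 l2" and b0: "b n1 m1 \<noteq> 0"
    and l2: "l2 > 0" and m1: "m1 \<ge> 1" and \<delta>: "\<delta> \<ge> 1"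
    and hc: "real n1 \<le> l2 * (real \<delta> - real m1)"
  shows "\<exists>cP cQ \<rho>. \<rho> > 0 \<and> absum cP \<rho> \<and> absum cQ \<rho> \<and>
     (\<forall>z w. norm z \<le> \<rho> \<longrightarrow> norm w \<le> \<rho> \<longrightarrow> (p^^n) z = ev cP z w \<and> skewQ p q n z w = ev cQ z w) \<and>
     supp2 cP (\<delta>^n) 0 l2 \<and> cP (\<delta>^n) 0 \<noteq> 0 \<and>
     supp2 cQ (gam n1 m1 \<delta> n) (m1^n) l2 \<and> cQ (gam n1 m1 \<delta> n) (m1^n) \<noteq> 0"
proof (induction n)
  case 0
  define cP where "cP = (\<lambda>(k::nat) (l::nat). if k = 1 \<and> l = 0 then (1::complex) else 0)"
  define cQ where "cQ = (\<lambda>(k::nat) (l::nat). if k = 0 \<and> l = 1 then (1::complex) else 0)"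
  have aP: "absum cP 1" and aQ: "absum cQ 1"
  proof -
    have "((\<lambda>(k,l). norm (cP k l) * 1^k * 1^l) has_sum (\<lambda>(k,l). norm (cP k l) * 1^k * 1^l) (1,0)) UNIV"
      by (rule has_sum_single) (auto simp: cP_def split: if_splits)
    then show "absum cP 1" unfolding absum_def by (auto simp: summable_on_def)
    have "((\<lambda>(k,l). norm (cQ k l) * 1^k * 1^l) has_sum (\<lambda>(k,l). norm (cQ k l) * 1^k * 1^l) (0,1)) UNIV"
      by (rule has_sum_single) (auto simp: cQ_def split: if_splits)
    then show "absum cQ 1" unfolding absum_def by (auto simp: summable_on_def)
  qed
  have eP: "ev cP z w = z" for z w
  proof -
    have "ev cP z w = (\<lambda>(k,l). cP k l * z^k * w^l) (1,0)"
      unfolding ev_def by (rule infsum_single) (auto simp: cP_def split: if_splits)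
    then show ?thesis by (simp add: cP_def)
  qed
  have eQ: "ev cQ z w = w" for z w
  proof -
    have "ev cQ z w = (\<lambda>(k,l). cQ k l * z^k * w^l) (0,1)"
      unfolding ev_def by (rule infsum_single) (auto simp: cQ_def split: if_splits)
    then show ?thesis by (simp add: cQ_def)
  qed
  have sP: "supp2 cP (\<delta>^0) 0 l2" by (auto simp: supp2_def cP_def split: if_splits)
  have sQ: "supp2 cQ (gam n1 m1 \<delta> 0) (m1^0) l2" by (auto simp: supp2_def cQ_def split: if_splits)
  show ?case
    by (rule exI[of _ cP], rule exI[of _ cQ], rule exI[of _ 1]) (use aP aQ eP eQ sP sQ in \<open>simp add: cP_def cQ_def\<close>)
next
  case (Suc n)
  then obtain cP cQ \<rho> where r: "\<rho> > 0" and aP: "absum cP \<rho>" and aQ: "absum cQ \<rho>"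
    and ev: "\<And>z w. norm z \<le> \<rho> \<Longrightarrow> norm w \<le> \<rho> \<Longrightarrow> (p^^n) z = ev cP z w \<and> skewQ p q n z w = ev cQ z w"
    and sP: "supp2 cP (\<delta>^n) 0 l2" and nP: "cP (\<delta>^n) 0 \<noteq> 0"
    and sQ: "supp2 cQ (gam n1 m1 \<delta> n) (m1^n) l2" and nQ: "cQ (gam n1 m1 \<delta> n) (m1^n) \<noteq> 0"
    by blast
  define D where "D = \<delta>^n"
  define g where "g = gam n1 m1 \<delta> n"
  define e where "e = m1^n"
  have D1: "D \<ge> 1" using \<delta> by (simp add: D_def)
  have e1: "e \<ge> 1" using m1 by (simp add: e_def)
  have Hg: "real g + l2 * real e \<le> l2 * real D"
    unfolding g_def e_def D_def by (rule Hgam[OF l2 hc])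
  have P00: "cP 0 0 = 0"
  proof (rule ccontr)
    assume "cP 0 0 \<noteq> 0"
    then have "\<delta>^n \<le> 0" using sP unfolding supp2_def by blast
    then show False using D1 unfolding D_def by linarith
  qed
  have Q00: "cQ 0 0 = 0"
  proof (rule ccontr)
    assume "cQ 0 0 \<noteq> 0"
    then have "real g + l2 * real e \<le> real (0::nat) + l2 * real (0::nat)" using sQ unfolding supp2_def g_def e_def by blast
    then have "real g + l2 * real e \<le> 0" by simp
    moreover have "l2 * real e > 0" using l2 e1 by simp
    ultimately show False by simp
  qed
  define R where "R = min Rp Rq"
  have R: "R > 0" "R \<le> Rp" "R \<le> Rq" using Rp Rq by (auto simp: R_def)
  define N where "N = max (Nrm cP \<rho>) (Nrm cQ \<rho>)"
  have N0: "N \<ge> 0" using Nrm_nonneg[of \<rho> cP] r by (simp add: N_def le_max_iff_disj)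
  define \<rho>' where "\<rho>' = min \<rho> (\<rho> * R / (2 * (N + 1)))"
  have r': "\<rho>' > 0" "\<rho>' \<le> \<rho>" using r R N0 by (auto simp: \<rho>'_def)
  have rat: "\<rho>' / \<rho> \<le> R / (2 * (N + 1))"
  proof -
    have "\<rho>' \<le> \<rho> * R / (2 * (N + 1))" by (simp add: \<rho>'_def)
    then show ?thesis using r N0 by (simp add: field_simps)
  qed
  have small: "Nrm c \<rho>' < R" if "absum c \<rho>" "c 0 0 = 0" "Nrm c \<rho> \<le> N" for c
  proof -
    have "Nrm c \<rho>' \<le> (\<rho>' / \<rho>) * Nrm c \<rho>" by (rule Nrm_scale[OF that(1) r _ r'(2) that(2)]) (use r' in simp)
    also have "\<dots> \<le> (R / (2 * (N + 1))) * N"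
      using rat that(3) Nrm_nonneg[of \<rho> c] r r' N0 R(1) by (intro mult_mono) auto
    also have "\<dots> < R"
    proof -
      have "N / (2 * (N + 1)) < 1" using N0 by (simp add: field_simps)
      then have "R * (N / (2 * (N + 1))) < R * 1" using R(1) by (intro mult_strict_left_mono) auto
      then show ?thesis by simp
    qed
    finally show ?thesis .
  qed
  have aP': "absum cP \<rho>'" using absum_mono(1)[OF aP] r' by simp
  have aQ': "absum cQ \<rho>'" using absum_mono(1)[OF aQ] r' by simp
  have NP: "Nrm cP \<rho>' < R" using small[OF aP P00] by (simp add: N_def)
  have NQ: "Nrm cQ \<rho>' < R" using small[OF aQ Q00] by (simp add: N_def)
  define cP' where "cP' = comp2 Bp cP zero2"
  define cQ' where "cQ' = comp2 b cP cQ"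
  have FpR: "\<And>x y. norm x < Rp \<Longrightarrow> norm y < Rp \<Longrightarrow> ((\<lambda>(i,j). Bp i j * x^i * y^j) has_sum (\<lambda>x y. p x) x y) UNIV"
    using Fp by simp
  have aP'': "absum cP' \<rho>'"
    unfolding cP'_def
    by (rule comp2_props(1)[where R=Rp and F="\<lambda>x y. p x" and B=Bp and G=cP and H=zero2 and \<rho>=\<rho>'])
      (use FpR aP' zero2_props(1) r' NP R zero2_props(2) Rp in auto)
  have aQ'': "absum cQ' \<rho>'"
    unfolding cQ'_def
    by (rule comp2_props(1)[where R=Rq and F=q and B=b and G=cP and H=cQ and \<rho>=\<rho>'])
      (use Fq aP' aQ' r' NP NQ R in auto)
  have ev': "(p^^Suc n) z = ev cP' z w \<and> skewQ p q (Suc n) z w = ev cQ' z w"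
    if z: "norm z \<le> \<rho>'" and w: "norm w \<le> \<rho>'" for z w
  proof
    have zw: "norm z \<le> \<rho>" "norm w \<le> \<rho>" using z w r' by auto
    have "(\<lambda>x y. p x) (ev cP z w) (ev zero2 z w) = ev cP' z w"
      unfolding cP'_def
      by (rule comp2_props(2)[where R=Rp and F="\<lambda>x y. p x" and B=Bp and G=cP and H=zero2 and \<rho>=\<rho>'])
        (use FpR aP' zero2_props(1) r' NP R zero2_props(2) Rp z w in auto)
    then show "(p^^Suc n) z = ev cP' z w" using ev[OF zw] by simp
    have "q (ev cP z w) (ev cQ z w) = ev cQ' z w"
      unfolding cQ'_def
      by (rule comp2_props(2)[where R=Rq and F=q and B=b and G=cP and H=cQ and \<rho>=\<rho>'])
        (use Fq aP' aQ' r' NP NQ R z w in auto)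
    then show "skewQ p q (Suc n) z w = ev cQ' z w" using ev[OF zw] by simp
  qed
  have sP1: "supp2 cP D 0 l2" using sP by (simp add: D_def)
  have sQ1: "supp2 cQ g e l2" using sQ by (simp add: g_def e_def)
  have sP': "supp2 cP' (\<delta>^Suc n) 0 l2"
    unfolding supp2_def
  proof (intro allI impI)
    fix k l assume "cP' k l \<noteq> 0"
    then obtain i j where ij: "Bp i j \<noteq> 0" "mono2 cP zero2 i j k l \<noteq> 0"
      unfolding cP'_def using comp2_nonzero by blast
    have j: "j = 0" "\<delta> \<le> i" using Bp1[OF ij(1)] by auto
    have "supp2 (mono2 cP zero2 i j) (i*D + j*0) (i*0 + j*0) l2"
      by (rule mono2_supp(1)[OF sP1 zero2_props(4) l2])
    then have "i * D + j * 0 \<le> k" using ij(2) unfolding supp2_def by blast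
    then have "i * D \<le> k" by simp
    moreover have "\<delta> * D \<le> i * D" using j by simp
    ultimately have k: "\<delta>^Suc n \<le> k" unfolding D_def by (metis order_trans power_Suc)
    have a1: "real (\<delta>^Suc n) \<le> real k" using k by (simp only: of_nat_le_iff)
    have a2: "0 \<le> l2 * real l" using l2 by simp
    have a3: "l2 * real (0::nat) = 0" by simp
    show "\<delta>^Suc n \<le> k \<and> real (\<delta>^Suc n) + l2 * real 0 \<le> real k + l2 * real l"
      using k a1 a2 a3 by (intro conjI; linarith)
  qed
  have nP': "cP' (\<delta>^Suc n) 0 \<noteq> 0"
  proof -
    have v: "mono2 cP zero2 \<delta> 0 (\<delta>*D + 0*0) (\<delta>*0 + 0*0) = cP D 0 ^ \<delta> * zero2 0 0 ^ 0"
      by (rule mono2_supp(2)[OF sP1 zero2_props(4) l2])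
    have "cP' (\<delta>^Suc n) 0 = Bp \<delta> 0 * mono2 cP zero2 \<delta> 0 (\<delta>^Suc n) 0"
      unfolding cP'_def
    proof (rule comp2_single)
      fix i j :: nat assume ne: "(i, j) \<noteq> (\<delta>, 0)"
      show "Bp i j = 0 \<or> mono2 cP zero2 i j (\<delta> ^ Suc n) 0 = 0"
      proof (rule ccontr)
        assume "\<not> ?thesis"
        then have ij: "Bp i j \<noteq> 0" "mono2 cP zero2 i j (\<delta> ^ Suc n) 0 \<noteq> 0" by auto
        have j: "j = 0" "\<delta> \<le> i" using Bp1[OF ij(1)] by auto
        then have i: "\<delta> < i" using ne by auto
        have "supp2 (mono2 cP zero2 i j) (i*D + j*0) (i*0 + j*0) l2"
          by (rule mono2_supp(1)[OF sP1 zero2_props(4) l2])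
        then have "i * D + j * 0 \<le> \<delta> ^ Suc n" using ij(2) unfolding supp2_def by blast
        then have "i * D \<le> \<delta> * D" by (simp add: D_def)
        then have "i \<le> \<delta>" using D1 by simp
        then show False using i by simp
      qed
    qed
    also have "\<dots> = Bp \<delta> 0 * cP D 0 ^ \<delta>" using v by (simp add: D_def zero2_def)
    finally show ?thesis using Bp2 nP by (simp add: D_def)
  qed
  have gS: "gam n1 m1 \<delta> (Suc n) = n1 * D + m1 * g" by (simp add: D_def g_def)
  have eS: "m1^Suc n = m1 * e" by (simp add: e_def)
  have bineq: "real n1 * real D + real m1 * real g \<le> real i * real D + real j * real g \<and>
      real n1 * real D + real m1 * real g + l2 * (real m1 * real e) \<le> real i * real D + real j * real g + l2 * (real j * real e)"
    if "b i j \<noteq> 0" for i j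
  proof -
    have "n1 \<le> i" "real n1 + l2 * real m1 \<le> real i + l2 * real j" using bs that unfolding supp2_def by auto
    then show ?thesis using key_ineq[where aa="real n1" and i="real i" and l=l2 and cc="real m1" and j="real j" and D="real D" and g="real g" and e="real e"] l2 Hg
      by auto
  qed
  have sQ': "supp2 cQ' (gam n1 m1 \<delta> (Suc n)) (m1^Suc n) l2"
    unfolding supp2_def gS eS
  proof (intro allI impI)
    fix k l assume "cQ' k l \<noteq> 0"
    then obtain i j where ij: "b i j \<noteq> 0" "mono2 cP cQ i j k l \<noteq> 0"
      unfolding cQ'_def using comp2_nonzero by blast
    have "supp2 (mono2 cP cQ i j) (i*D + j*g) (i*0 + j*e) l2"
      by (rule mono2_supp(1)[OF sP1 sQ1 l2])
    then have k1: "i*D + j*g \<le> k" and k2: "real (i*D + j*g) + l2 * real (i*0 + j*e) \<le> real k + l2 * real l"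
      using ij(2) unfolding supp2_def by blast+
    have bi: "real n1 * real D + real m1 * real g \<le> real i * real D + real j * real g"
      "real n1 * real D + real m1 * real g + l2 * (real m1 * real e) \<le> real i * real D + real j * real g + l2 * (real j * real e)"
      using bineq[OF ij(1)] by auto
    have c1: "real (n1*D + m1*g) = real n1 * real D + real m1 * real g" by simp
    have c2: "real (i*D + j*g) = real i * real D + real j * real g" by simp
    have c3: "l2 * real (i*0 + j*e) = l2 * (real j * real e)" by simp
    have c4: "l2 * real (m1*e) = l2 * (real m1 * real e)" by simp
    have k1r: "real (i*D + j*g) \<le> real k" using k1 by (simp only: of_nat_le_iff)
    have "real (n1 * D + m1 * g) \<le> real k" using bi(1) k1r c1 c2 by linarith
    then have "n1 * D + m1 * g \<le> k" by (simp only: of_nat_le_iff)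
    moreover have "real (n1 * D + m1 * g) + l2 * real (m1 * e) \<le> real k + l2 * real l"
      using bi(2) k2 c1 c2 c3 c4 by linarith
    ultimately show "n1 * D + m1 * g \<le> k \<and> real (n1 * D + m1 * g) + l2 * real (m1 * e) \<le> real k + l2 * real l"
      by blast
  qed
  have nQ': "cQ' (gam n1 m1 \<delta> (Suc n)) (m1^Suc n) \<noteq> 0"
  proof -
    have v: "mono2 cP cQ n1 m1 (n1*D + m1*g) (n1*0 + m1*e) = cP D 0 ^ n1 * cQ g e ^ m1"
      by (rule mono2_supp(2)[OF sP1 sQ1 l2])
    have "cQ' (n1 * D + m1 * g) (m1 * e) = b n1 m1 * mono2 cP cQ n1 m1 (n1 * D + m1 * g) (m1 * e)"
      unfolding cQ'_def
    proof (rule comp2_single)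
      fix i j assume ne: "(i, j) \<noteq> (n1, m1)"
      show "b i j = 0 \<or> mono2 cP cQ i j (n1 * D + m1 * g) (m1 * e) = 0"
      proof (rule ccontr)
        assume "\<not> ?thesis"
        then have ij: "b i j \<noteq> 0" "mono2 cP cQ i j (n1 * D + m1 * g) (m1 * e) \<noteq> 0" by auto
        have "supp2 (mono2 cP cQ i j) (i*D + j*g) (i*0 + j*e) l2"
          by (rule mono2_supp(1)[OF sP1 sQ1 l2])
        then have k1: "i*D + j*g \<le> n1 * D + m1 * g"
          and k2: "real (i*D + j*g) + l2 * real (i*0 + j*e) \<le> real (n1 * D + m1 * g) + l2 * real (m1 * e)"
          using ij(2) unfolding supp2_def by blast+
        have bi: "real n1 * real D + real m1 * real g \<le> real i * real D + real j * real g"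
          "real n1 * real D + real m1 * real g + l2 * (real m1 * real e) \<le> real i * real D + real j * real g + l2 * (real j * real e)"
          using bineq[OF ij(1)] by auto
        have c1: "real (n1*D + m1*g) = real n1 * real D + real m1 * real g" by simp
        have c2: "real (i*D + j*g) = real i * real D + real j * real g" by simp
        have c3: "l2 * real (i*0 + j*e) = l2 * (real j * real e)" by simp
        have c4: "l2 * real (m1*e) = l2 * (real m1 * real e)" by simp
        have k1r: "real (i*D + j*g) \<le> real (n1*D + m1*g)" using k1 by (simp only: of_nat_le_iff)
        have k1': "real i * real D + real j * real g \<le> real n1 * real D + real m1 * real g"
          using k1r c1 c2 by linarith
        have "l2 * (real j * real e) = l2 * (real m1 * real e)" using k2 bi k1' c1 c2 c3 c4 by linarith
        then have jm: "j = m1" using l2 e1 by simp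
        then have "real i * real D = real n1 * real D" using k1' bi(1) unfolding jm by linarith
        then have "i = n1" using D1 by simp
        then show False using ne jm by simp
      qed
    qed
    also have "\<dots> = b n1 m1 * (cP D 0 ^ n1 * cQ g e ^ m1)" using v by simp
    finally show ?thesis using b0 nP nQ gS eS by (simp add: D_def g_def e_def)
  qed
  show ?case
    using r'(1) aP'' aQ'' ev' sP' nP' sQ' nQ' by blast
qed




lemma p_series:
  fixes p :: "complex \<Rightarrow> complex"
  assumes ph: "p holomorphic_on ball 0 r" and x: "norm x < r"
  shows "((\<lambda>(i,j). (if j = 0 then (deriv ^^ i) p 0 / fact i else 0) * x^i * y^j) has_sum p x) UNIV"
proof -
  define pc where "pc = (\<lambda>k. (deriv ^^ k) p 0 / fact k)"
  define s where "s = (norm x + r) / 2"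
  have s: "norm x < s" "s < r" using x by (auto simp: s_def)
  have "(\<lambda>n. pc n * (complex_of_real s)^n) sums p (complex_of_real s)"
    using holomorphic_power_series[OF ph, of "complex_of_real s"] s norm_ge_zero[of x]
    by (simp add: pc_def dist_norm)
  then have sm: "summable (\<lambda>n. pc n * (complex_of_real s)^n)" by (rule sums_summable)
  have ns: "summable (\<lambda>n. norm (pc n * x^n))"
    by (rule powser_insidea[OF sm]) (use s norm_ge_zero[of x] in simp)
  have "(\<lambda>n. pc n * x^n) sums p x"
    using holomorphic_power_series[OF ph, of x] x by (simp add: pc_def dist_norm)
  then have hs: "((\<lambda>n. pc n * x^n) has_sum p x) UNIV"
    by (rule norm_summable_imp_has_sum[OF ns])
  define g where "g = (\<lambda>(i,j). (if j = 0 then pc i else 0) * x^i * y^j)"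
  have inj: "inj_on (\<lambda>i::nat. (i, 0::nat)) UNIV" by (auto simp: inj_on_def)
  have "(g \<circ> (\<lambda>i. (i, 0::nat))) = (\<lambda>n. pc n * x^n)" by (auto simp: g_def)
  then have "(g has_sum p x) (range (\<lambda>i. (i, 0::nat)))"
    using has_sum_reindex[OF inj, of g "p x"] hs by simp
  moreover have zz: "g z = 0" if "z \<in> UNIV - range (\<lambda>i. (i, 0::nat))" for z
  proof -
    obtain i j where z: "z = (i,j)" by (cases z)
    then have "j \<noteq> 0" using that by auto
    then show ?thesis using z by (simp add: g_def)
  qed
  moreover have "(g has_sum p x) (range (\<lambda>i. (i, 0::nat))) \<longleftrightarrow> (g has_sum p x) UNIV"
    by (rule has_sum_cong_neutral) (use zz in auto)
  ultimately have "(g has_sum p x) UNIV" by blast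
  then show ?thesis unfolding g_def pc_def .
qed

theorem proposition5:
  fixes p :: "complex \<Rightarrow> complex" and q :: "complex \<Rightarrow> complex \<Rightarrow> complex"
    and b :: "nat \<Rightarrow> nat \<Rightarrow> complex" and \<delta> :: nat
    and n1 m1 n2 m2 :: nat
  assumes p_holo: "\<exists>r>0. p holomorphic_on ball 0 r"
    and delta_ge: "\<delta> \<ge> 1"
    and p_order: "\<forall>k<\<delta>. (deriv ^^ k) p 0 = 0" "(deriv ^^ \<delta>) p 0 \<noteq> 0"
    and q_series: "pseries2_at0 q b"
    and q_zero: "b 0 0 = 0"
    and q_nonzero: "\<exists>i j. b i j \<noteq> 0"
    and v1: "(real n1, real m1) \<in> newton_vertices b"
    and v1_min: "\<forall>v\<in>newton_vertices b. real n1 \<le> fst v"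
    and v2: "(real n2, real m2) \<in> newton_vertices b"
    and n12: "n1 < n2"
    and v2_next: "\<forall>v\<in>newton_vertices b. fst v \<le> real n1 \<or> real n2 \<le> fst v"
    and case3: "real m1 + real n1 * (real m1 - real m2) / (real n2 - real n1) \<le> real \<delta>"
  shows "\<forall>n\<ge>1.
     let \<gamma>n = n1 * (\<Sum>k<n. \<delta> ^ (n - 1 - k) * m1 ^ k);
         l2 = (real n2 - real n1) / (real m1 - real m2)
     in (\<exists>c. pseries2_at0 (skewQ p q n) c) \<and>
        (\<forall>c. pseries2_at0 (skewQ p q n) c \<longrightarrow>
           z_order_is c \<gamma>n \<and>
           (real \<gamma>n, real (m1 ^ n)) \<in> newton_vertices c \<and>
           (\<forall>v\<in>newton_vertices c. real \<gamma>n \<le> fst v) \<and>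
           newton_polygon c \<subseteq> {(x,y). x \<ge> real \<gamma>n \<and>
                                     x + l2 * y \<ge> real \<gamma>n + l2 * real (m1 ^ n)})"
proof -
  obtain r where r: "r > 0" and ph: "p holomorphic_on ball 0 r" using p_holo by blast
  define Bp where "Bp = (\<lambda>i j::nat. if j = 0 then (deriv ^^ i) p 0 / fact i else 0)"
  have Fp: "\<And>x y. norm x < r \<Longrightarrow> norm y < r \<Longrightarrow> ((\<lambda>(i,j). Bp i j * x^i * y^j) has_sum p x) UNIV"
    unfolding Bp_def using p_series[OF ph] by blast
  have Bp1: "j = 0 \<and> \<delta> \<le> i" if "Bp i j \<noteq> 0" for i j
  proof -
    have j: "j = 0" using that by (simp add: Bp_def split: if_splits)
    have "\<not> i < \<delta>"
    proof
      assume "i < \<delta>"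
      then have "(deriv ^^ i) p 0 = 0" using p_order(1) by blast
      then show False using that j by (simp add: Bp_def)
    qed
    then show ?thesis using j by simp
  qed
  have Bp2: "Bp \<delta> 0 \<noteq> 0" using p_order(2) by (simp add: Bp_def)
  obtain Rq where Rq: "Rq > 0" and Fq0: "\<forall>z w. cmod z < Rq \<longrightarrow> cmod w < Rq \<longrightarrow>
       ((\<lambda>(i,j). b i j * z ^ i * w ^ j) has_sum q z w) UNIV"
    using q_series unfolding pseries2_at0_def by blast
  have Fq: "\<And>x y. norm x < Rq \<Longrightarrow> norm y < Rq \<Longrightarrow> ((\<lambda>(i,j). b i j * x^i * y^j) has_sum q x y) UNIV"
    using Fq0 by blast
  note bf = b_facts[OF v1 v1_min v2 n12 v2_next]
  define l2 where "l2 = (real n2 - real n1) / (real m1 - real m2)"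
  have l2: "l2 > 0" using bf(2) n12 by (simp add: l2_def)
  have bs: "supp2 b n1 m1 l2" using bf(3,4) unfolding supp2_def l2_def by blast
  have m1: "m1 \<ge> 1" using bf(2) by simp
  have hc: "real n1 \<le> l2 * (real \<delta> - real m1)"
  proof -
    have "real n1 * (real m1 - real m2) / (real n2 - real n1) = real n1 / l2"
      by (simp add: l2_def)
    then have "real n1 / l2 \<le> real \<delta> - real m1" using case3 by simp
    then show ?thesis using l2 by (simp add: divide_le_eq mult.commute)
  qed
  show ?thesis
  proof (intro allI impI)
    fix n :: nat assume "n \<ge> 1"
    obtain cP cQ \<rho> where r0: "\<rho> > 0" and aQ: "absum cQ \<rho>"
      and ev: "\<And>z w. norm z \<le> \<rho> \<Longrightarrow> norm w \<le> \<rho> \<Longrightarrow> skewQ p q n z w = ev cQ z w"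
      and sQ: "supp2 cQ (gam n1 m1 \<delta> n) (m1^n) l2" and nQ: "cQ (gam n1 m1 \<delta> n) (m1^n) \<noteq> 0"
      using main_inv[OF Fp r Bp1 Bp2 Fq Rq bs bf(1) l2 m1 delta_ge hc, of n] by blast
    define \<gamma> where "\<gamma> = gam n1 m1 \<delta> n"
    define e where "e = m1 ^ n"
    have \<gamma>f: "n1 * (\<Sum>k<n. \<delta> ^ (n - 1 - k) * m1 ^ k) = \<gamma>" unfolding \<gamma>_def by (rule gam_formula[symmetric])
    have sQ': "supp2 cQ \<gamma> e l2" using sQ by (simp add: \<gamma>_def e_def)
    have nQ': "cQ \<gamma> e \<noteq> 0" using nQ by (simp add: \<gamma>_def e_def)
    have ex: "pseries2_at0 (skewQ p q n) cQ" by (rule rep_pseries[OF r0 aQ ev])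
    have props: "z_order_is c \<gamma> \<and>
           (real \<gamma>, real e) \<in> newton_vertices c \<and>
           (\<forall>v\<in>newton_vertices c. real \<gamma> \<le> fst v) \<and>
           newton_polygon c \<subseteq> {(x,y). x \<ge> real \<gamma> \<and> x + l2 * y \<ge> real \<gamma> + l2 * real e}"
      if c: "pseries2_at0 (skewQ p q n) c" for c
    proof -
      have "c k l = cQ k l" for k l by (rule coeff_unique[OF c r0 aQ ev])
      then have cc: "c = cQ" by (intro ext)
      have H1: "newton_polygon cQ \<subseteq> {v. 1 * fst v + 0 * snd v \<ge> real \<gamma>}"
        by (rule poly_sub_half) (use sQ' in \<open>auto simp: supp2_def\<close>)
      have H2: "newton_polygon cQ \<subseteq> {v. 1 * fst v + l2 * snd v \<ge> real \<gamma> + l2 * real e}"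
        by (rule poly_sub_half) (use sQ' l2 in \<open>auto simp: supp2_def\<close>)
      have zo: "z_order_is cQ \<gamma>"
        unfolding z_order_is_def using sQ' nQ' unfolding supp2_def by (meson not_le)
      have vx: "(real \<gamma>, real e) extreme_point_of newton_polygon cQ"
        by (rule ext_pt[OF H1 H2 supp_in_poly[of cQ \<gamma> e, OF nQ']]) (use l2 in auto)
      have mn: "\<forall>v\<in>newton_vertices cQ. real \<gamma> \<le> fst v"
        using H1 vertex_in_poly by fastforce
      have sub: "newton_polygon cQ \<subseteq> {(x,y). x \<ge> real \<gamma> \<and> x + l2 * y \<ge> real \<gamma> + l2 * real e}"
        using H1 H2 by auto
      show ?thesis using zo vx mn sub cc by (simp add: newton_vertices_def)
    qed
    show "let \<gamma>n = n1 * (\<Sum>k<n. \<delta> ^ (n - 1 - k) * m1 ^ k);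
         l2 = (real n2 - real n1) / (real m1 - real m2)
     in (\<exists>c. pseries2_at0 (skewQ p q n) c) \<and>
        (\<forall>c. pseries2_at0 (skewQ p q n) c \<longrightarrow>
           z_order_is c \<gamma>n \<and>
           (real \<gamma>n, real (m1 ^ n)) \<in> newton_vertices c \<and>
           (\<forall>v\<in>newton_vertices c. real \<gamma>n \<le> fst v) \<and>
           newton_polygon c \<subseteq> {(x,y). x \<ge> real \<gamma>n \<and>
                                     x + l2 * y \<ge> real \<gamma>n + l2 * real (m1 ^ n)})"
      unfolding Let_def \<gamma>f l2_def[symmetric] e_def[symmetric]
      using ex props by blast
  qed
qed



end
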